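(* Let $\mathcal P$ and $\mathrm{conv}(\mathcal P)$ be as in the context. Let $k\in[1,T-1]_{\mathbb Z}$ with $\overline C-\underline C-kV>0$, $m\in[0,k-1]_{\mathbb Z}$, and $\mathcal S\subseteq[0,\min\{k-1,L-m-1\}]_{\mathbb Z}$. For any $t\in[k+1,T-m]_{\mathbb Z}$, the inequality $$x_t-x_{t-k}\le(\underline C+(k-m)V)y_t+V\sum_{i=1}^m y_{t+i}-\underline C y_{t-k}-\sum_{s\in\mathcal S}(\underline C+(k-s)V-\overline V)(y_{t-s}-y_{t-s-1})\qquad(\ast)$$ is valid for $\mathrm{conv}(\mathcal P)$. For any $t\in[m+1,T-k]_{\mathbb Z}$, the inequality $$x_t-x_{t+k}\le(\underline C+(k-m)V)y_t+V\sum_{i=1}^m y_{t-i}-\underline C y_{t+k}-\sum_{s\in\mathcal S}(\underline C+(k-s)V-\overline V)(y_{t+s}-y_{t+s+1})\qquad(\ast\ast)$$ is valid for $\mathrm{conv}(\mathcal P)$. Furthermore, $(\ast)$ and $(\ast\ast)$ are facet-defining for $\mathrm{conv}(\mathcal P)$ when $m=0$ and $s\ge\min\{k-1,1\}$ for all $s\in\mathcal S$.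
   Context: For integers $a,b$, $[a,b]_{\mathbb Z}=\{a,a+1,\dots,b\}$ if $a\le b$ and $\emptyset$ otherwise. Fix a positive integer $T$, positive integers $L$ (minimum up time) and $\ell$ (minimum down time), and reals $\overline C,\underline C,V,\overline V$ with $\overline C>\underline C>0$, $V>0$, $\overline V+V\le\overline C$ and $\underline C<\overline V<\underline C+V$. $\mathcal P$ is the set of $(\mathbf x,\mathbf y)=((x_1,\dots,x_T),(y_1,\dots,y_T))\in\mathbb R_+^T\times\{0,1\}^T$ satisfying: (i) $-y_{t-1}+y_t-y_k\le 0$ for all $t\in[2,T]_{\mathbb Z}$, $k\in[t,\min\{T,t+L-1\}]_{\mathbb Z}$; (ii) $y_{t-1}-y_t+y_k\le 1$ for all $t\in[2,T]_{\mathbb Z}$, $k\in[t,\min\{T,t+\ell-1\}]_{\mathbb Z}$; (iii) $-x_t+\underline C y_t\le 0$ and $x_t-\overline C y_t\le 0$ for all $t\in[1,T]_{\mathbb Z}$; (iv) $x_t-x_{t-1}\le Vy_{t-1}+\overline V(1-y_{t-1})$ for all $t\in[2,T]_{\mathbb Z}$; (v) $x_{t-1}-x_t\le Vy_t+\overline V(1-y_t)$ for all $t\in[2,T]_{\mathbb Z}$. $\mathrm{conv}(\mathcal P)\subseteq\mathbb R^{2T}$ is its convex hull. A linear inequality is valid for $\mathrm{conv}(\mathcal P)$ if all its points satisfy it, and facet-defining if moreover the set of points of $\mathrm{conv}(\mathcal P)$ satisfying it with equality has dimension $\dim\mathrm{conv}(\mathcal P)-1$. *)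

theory Defs
  imports "HOL-Analysis.Analysis" "HOL-Library.Function_Algebras"
begin

instantiation "fun" :: (type, real_vector) real_vector
begin
definition scaleR_fun :: "real \<Rightarrow> ('a \<Rightarrow> 'b) \<Rightarrow> 'a \<Rightarrow> 'b"
  where "scaleR_fun r f = (\<lambda>x. r *\<^sub>R f x)"
instance
  by standard (auto simp: scaleR_fun_def fun_eq_iff scaleR_add_right scaleR_add_left)
end

definition setdim :: "'a::real_vector set \<Rightarrow> int" where
  "setdim S = (if S = {} then -1 else
     int (GREATEST n. \<exists>B. finite B \<and> B \<subseteq> S \<and> card B = Suc n \<and> \<not> affine_dependent B))"

definition valid_ineq :: "'a set \<Rightarrow> ('a \<Rightarrow> real) \<Rightarrow> ('a \<Rightarrow> real) \<Rightarrow> bool" where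
  "valid_ineq K f g \<longleftrightarrow> (\<forall>p\<in>K. f p \<le> g p)"

definition facet_defining :: "'a::real_vector set \<Rightarrow> ('a \<Rightarrow> real) \<Rightarrow> ('a \<Rightarrow> real) \<Rightarrow> bool" where
  "facet_defining K f g \<longleftrightarrow> valid_ineq K f g \<and> setdim {p\<in>K. f p = g p} = setdim K - 1"

text \<open>A point (x,y) of R^(2T) is represented by two functions nat to real, with
  the coordinates x_1..x_T, y_1..y_T at indices 1..T and all other entries 0.\<close>

definition Pset :: "nat \<Rightarrow> nat \<Rightarrow> nat \<Rightarrow> real \<Rightarrow> real \<Rightarrow> real \<Rightarrow> real
    \<Rightarrow> ((nat \<Rightarrow> real) \<times> (nat \<Rightarrow> real)) set" where
  "Pset T L l Cu Cl V Vb = {(x, y).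
     (\<forall>t. t \<notin> {1..T} \<longrightarrow> x t = 0 \<and> y t = 0) \<and>
     (\<forall>t\<in>{1..T}. x t \<ge> 0 \<and> (y t = 0 \<or> y t = 1)) \<and>
     (\<forall>t\<in>{2..T}. \<forall>k\<in>{t..min T (t + L - 1)}. - y (t - 1) + y t - y k \<le> 0) \<and>
     (\<forall>t\<in>{2..T}. \<forall>k\<in>{t..min T (t + l - 1)}. y (t - 1) - y t + y k \<le> 1) \<and>
     (\<forall>t\<in>{1..T}. - x t + Cl * y t \<le> 0 \<and> x t - Cu * y t \<le> 0) \<and>
     (\<forall>t\<in>{2..T}. x t - x (t - 1) \<le> V * y (t - 1) + Vb * (1 - y (t - 1))) \<and>
     (\<forall>t\<in>{2..T}. x (t - 1) - x t \<le> V * y t + Vb * (1 - y t))}"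

definition lhs1 :: "nat \<Rightarrow> nat \<Rightarrow> (nat \<Rightarrow> real) \<times> (nat \<Rightarrow> real) \<Rightarrow> real" where
  "lhs1 k t p = fst p t - fst p (t - k)"

definition rhs1 :: "real \<Rightarrow> real \<Rightarrow> real \<Rightarrow> nat \<Rightarrow> nat \<Rightarrow> nat set \<Rightarrow> nat
    \<Rightarrow> (nat \<Rightarrow> real) \<times> (nat \<Rightarrow> real) \<Rightarrow> real" where
  "rhs1 Cl V Vb k m S t p =
     (Cl + real (k - m) * V) * snd p t + V * (\<Sum>i=1..m. snd p (t + i)) - Cl * snd p (t - k)
     - (\<Sum>s\<in>S. (Cl + real (k - s) * V - Vb) * (snd p (t - s) - snd p (t - s - 1)))"

definition lhs2 :: "nat \<Rightarrow> nat \<Rightarrow> (nat \<Rightarrow> real) \<times> (nat \<Rightarrow> real) \<Rightarrow> real" where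
  "lhs2 k t p = fst p t - fst p (t + k)"

definition rhs2 :: "real \<Rightarrow> real \<Rightarrow> real \<Rightarrow> nat \<Rightarrow> nat \<Rightarrow> nat set \<Rightarrow> nat
    \<Rightarrow> (nat \<Rightarrow> real) \<times> (nat \<Rightarrow> real) \<Rightarrow> real" where
  "rhs2 Cl V Vb k m S t p =
     (Cl + real (k - m) * V) * snd p t + V * (\<Sum>i=1..m. snd p (t - i)) - Cl * snd p (t + k)
     - (\<Sum>s\<in>S. (Cl + real (k - s) * V - Vb) * (snd p (t + s) - snd p (t + s + 1)))"

end

theory Submission
  imports Defs "HOL-Library.Product_Plus"
begin
locale prm =
  fixes T L l :: nat and Cu Cl V Vb :: real
  assumes T0: "T > 0" and L0: "L > 0" and l0: "l > 0"
    and CuCl: "Cu > Cl" and Cl0: "Cl > 0" and V0: "V > 0" and VbV: "Vb + V \<le> Cu"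
    and ClVb: "Cl < Vb" and VbCl: "Vb < Cl + V"

locale pt = prm +
  fixes x y :: "nat \<Rightarrow> real"
  assumes inP: "(x, y) \<in> Pset T L l Cu Cl V Vb"
begin

lemma outside: "t \<notin> {1..T} \<Longrightarrow> x t = 0 \<and> y t = 0"
  using inP by (simp add: Pset_def)
lemma xnn: "t \<in> {1..T} \<Longrightarrow> x t \<ge> 0"
  using inP by (simp add: Pset_def)
lemma ybin: "t \<in> {1..T} \<Longrightarrow> y t = 0 \<or> y t = 1"
  using inP by (simp add: Pset_def)
lemma ybin': "y t = 0 \<or> y t = 1"
  using ybin outside by (cases "t \<in> {1..T}") auto
lemma x_ge0: "x t \<ge> 0"
  using xnn outside by (cases "t \<in> {1..T}") auto
lemma MUc: "t \<in> {2..T} \<Longrightarrow> k \<in> {t..min T (t + L - 1)} \<Longrightarrow> - y (t - 1) + y t - y k \<le> 0"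
  using inP by (simp add: Pset_def)
lemma MDc: "t \<in> {2..T} \<Longrightarrow> k \<in> {t..min T (t + l - 1)} \<Longrightarrow> y (t - 1) - y t + y k \<le> 1"
  using inP by (simp add: Pset_def)
lemma xlo: "t \<in> {1..T} \<Longrightarrow> Cl * y t \<le> x t"
  using inP by (simp add: Pset_def)
lemma xhi: "t \<in> {1..T} \<Longrightarrow> x t \<le> Cu * y t"
  using inP by (simp add: Pset_def)
lemma xlo': "Cl * y t \<le> x t"
  using xlo outside by (cases "t \<in> {1..T}") auto
lemma xhi': "x t \<le> Cu * y t"
  using xhi outside by (cases "t \<in> {1..T}") auto
lemma RU: "t \<in> {2..T} \<Longrightarrow> x t - x (t - 1) \<le> V * y (t - 1) + Vb * (1 - y (t - 1))"
  using inP by (simp add: Pset_def)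
lemma RD: "t \<in> {2..T} \<Longrightarrow> x (t - 1) - x t \<le> V * y t + Vb * (1 - y t)"
  using inP by (simp add: Pset_def)

lemma MU:
  assumes "2 \<le> a" "y (a - 1) = 0" "y a = 1" "a \<le> j" "j \<le> T" "j \<le> a + L - 1"
  shows "y j = 1"
proof -
  have "a \<le> T" using assms by simp
  have "- y (a - 1) + y a - y j \<le> 0" using MUc[of a j] assms \<open>a \<le> T\<close> by simp
  then show ?thesis using ybin'[of j] assms by auto
qed

lemma ramp_up:
  assumes "2 \<le> a" "y (a - 1) = 0" "\<forall>i\<in>{a..a+d}. y i = 1" "a + d \<le> T"
  shows "x (a + d) \<le> Vb + real d * V"
  using assms(3,4)
proof (induction d)
  case 0
  have "x a - x (a - 1) \<le> V * y (a - 1) + Vb * (1 - y (a - 1))" using RU[of a] assms 0 by simp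
  then show ?case using assms(2) xhi'[of "a-1"] by simp
next
  case (Suc d)
  have IH: "x (a + d) \<le> Vb + real d * V" using Suc by auto
  have "y (a + d) = 1" using Suc.prems by auto
  moreover have "x (a + Suc d) - x (a + Suc d - 1) \<le> V * y (a + Suc d - 1) + Vb * (1 - y (a + Suc d - 1))"
    using RU[of "a + Suc d"] Suc.prems assms(1) by simp
  ultimately show ?case using IH by (simp add: algebra_simps)
qed

lemma ramp_down:
  assumes "y u = 0" "\<forall>i\<in>{j..j+d}. y i = 1" "u = j + d + 1" "u \<le> T" "1 \<le> j"
  shows "x j \<le> Vb + real d * V"
  using assms(2,3,5)
proof (induction d arbitrary: j)
  case 0
  have "x (u - 1) - x u \<le> V * y u + Vb * (1 - y u)" using RD[of u] assms(1,4) 0 by simp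
  then show ?case using assms(1) xhi'[of u] 0 by simp
next
  case (Suc d)
  have IH: "x (j+1) \<le> Vb + real d * V" using Suc.IH[of "j+1"] Suc.prems by auto
  have "y (j + 1) = 1" using Suc.prems by auto
  moreover have "x (j + 1 - 1) - x (j + 1) \<le> V * y (j + 1) + Vb * (1 - y (j + 1))"
    using RD[of "j + 1"] Suc.prems assms(4) by simp
  ultimately show ?case using IH by (simp add: algebra_simps)
qed

lemma ramp_on:
  assumes "\<forall>i\<in>{a..<a+d}. y i = 1" "a + d \<le> T" "1 \<le> a"
  shows "x (a + d) \<le> x a + real d * V"
  using assms(1,2)
proof (induction d)
  case 0 then show ?case by simp
next
  case (Suc d)
  have IH: "x (a + d) \<le> x a + real d * V" using Suc by auto
  have "y (a + d) = 1" using Suc.prems by auto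
  moreover have "x (a + Suc d) - x (a + Suc d - 1) \<le> V * y (a + Suc d - 1) + Vb * (1 - y (a + Suc d - 1))"
    using RU[of "a + Suc d"] Suc.prems assms by simp
  ultimately show ?case using IH by (simp add: algebra_simps)
qed

lemma last_startup:
  assumes "c < t" "y c = 0" "y t = 1"
  shows "\<exists>a. c < a \<and> a \<le> t \<and> y (a - 1) = 0 \<and> (\<forall>i\<in>{a..t}. y i = 1)"
  using assms
proof (induction t)
  case 0 then show ?case by simp
next
  case (Suc t)
  show ?case
  proof (cases "y t = 0")
    case True
    then show ?thesis using Suc.prems by (intro exI[of _ "Suc t"]) auto
  next
    case False
    then have yt: "y t = 1" using ybin'[of t] by auto
    with Suc.prems have "c < t" by (cases "c = t") auto
    from Suc.IH[OF this Suc.prems(2) yt] obtain a where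
      "c < a" "a \<le> t" "y (a - 1) = 0" "\<forall>i\<in>{a..t}. y i = 1" by blast
    then show ?thesis using Suc.prems
      by (intro exI[of _ a]) (auto simp: le_Suc_eq)
  qed
qed

lemma first_zero:
  "(\<forall>i\<in>{1..m}. y (t + i) = 1) \<or> (\<exists>j\<in>{1..m}. y (t + j) = 0 \<and> (\<forall>i\<in>{1..<j}. y (t + i) = 1))"
proof (induction m)
  case 0 then show ?case by simp
next
  case (Suc m)
  from Suc.IH show ?case
  proof (elim disjE)
    assume A: "\<forall>i\<in>{1..m}. y (t + i) = 1"
    show ?thesis
    proof (cases "y (t + Suc m) = 0")
      case True
      then show ?thesis using A by (intro disjI2 bexI[of _ "Suc m"]) auto
    next
      case False
      then show ?thesis using A ybin'[of "t + Suc m"] by (auto simp: le_Suc_eq)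
    qed
  next
    assume "\<exists>j\<in>{1..m}. y (t + j) = 0 \<and> (\<forall>i\<in>{1..<j}. y (t + i) = 1)"
    then show ?thesis by auto
  qed
qed

end

context pt begin

lemma y_nn: "y t \<ge> 0" using ybin'[of t] by auto

lemma valid1_pt:
  assumes k1: "1 \<le> k" and tk: "k + 1 \<le> t" and tm: "t + m \<le> T" and mk: "m \<le> k - 1"
    and Sc: "\<forall>s\<in>S. s \<le> k - 1 \<and> int s \<le> int L - int m - 1"
  shows "lhs1 k t (x, y) \<le> rhs1 Cl V Vb k m S t (x, y)"
proof -
  define c where "c s = Cl + real (k - s) * V - Vb" for s
  define D where "D = (\<Sum>s\<in>S. c s * (y (t - s) - y (t - s - 1)))"
  define Sy where "Sy = (\<Sum>i=1..m. y (t + i))"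
  have finS: "finite S" using Sc by (metis finite_atMost finite_subset atMost_iff subsetI)
  have cpos: "c s > 0" if "s \<le> k - 1" for s
  proof -
    have "real (k - s) \<ge> 1" using that k1 by linarith
    then have "real (k - s) * V \<ge> V" using V0 by (metis mult_le_cancel_right1 less_le_not_le)
    then show ?thesis unfolding c_def using VbCl by linarith
  qed
  have noStart: "y (t - s) - y (t - s - 1) \<le> 0"
    if s: "s \<in> S" and w: "t - s \<le> w" "w \<le> t + m" "y w = 0" for s w
  proof (rule ccontr)
    assume "\<not> ?thesis"
    then have a1: "y (t - s) = 1" "y (t - s - 1) = 0"
      using ybin'[of "t - s"] ybin'[of "t - s - 1"] by auto
    have "s \<le> k - 1" "int s \<le> int L - int m - 1" using Sc s by auto
    then have "s + 1 \<le> k" using k1 by linarith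
    moreover have "s + m + 1 \<le> L" using \<open>int s \<le> int L - int m - 1\<close> by linarith
    ultimately have h1: "2 \<le> t - s" "w \<le> t - s + L - 1" using w tk tm by auto
    have "y w = 1" using MU[of "t - s" w] a1 w tk tm h1
      by (simp add: diff_diff_add)
    then show False using w by simp
  qed
  have Syn: "Sy \<ge> 0" unfolding Sy_def by (rule sum_nonneg) (simp add: y_nn)
  have xtk: "x (t - k) \<ge> Cl * y (t - k)" by (rule xlo')
  have real_km: "real (k - m) = real k - real m" using mk k1 by (simp add: of_nat_diff)
  have km1: "real k - real m \<ge> 1" using mk k1 by linarith
  have main: "x t - x (t - k) \<le> (Cl + real (k - m) * V) * y t + V * Sy - Cl * y (t - k) - D"
  proof (cases "y t = 0")
    case True
    have "D \<le> 0" unfolding D_def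
    proof (rule sum_nonpos)
      fix s assume s: "s \<in> S"
      have "c s > 0" using cpos Sc s by auto
      moreover have "y (t - s) - y (t - s - 1) \<le> 0" using noStart[OF s, of t] True by auto
      ultimately show "c s * (y (t - s) - y (t - s - 1)) \<le> 0" by (simp add: mult_nonneg_nonpos)
    qed
    moreover have "x t = 0" using xhi'[of t] x_ge0[of t] True by simp
    moreover have "V * Sy \<ge> 0" using Syn V0 by simp
    ultimately show ?thesis using True xtk by simp
  next
    case False
    then have yt: "y t = 1" using ybin'[of t] by auto
    have FZ: "(Sy = real m) \<or> (\<exists>j. 1 \<le> j \<and> j \<le> m \<and> Sy \<ge> real j - 1 \<and> x t \<le> Vb + (real j - 1) * V)"
    proof -
      from first_zero[of m t] show ?thesis
      proof (elim disjE)
        assume "\<forall>i\<in>{1..m}. y (t + i) = 1"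
        then have "Sy = (\<Sum>i=1..m. 1)" unfolding Sy_def by (intro sum.cong) auto
        then show ?thesis by simp
      next
        assume "\<exists>j\<in>{1..m}. y (t + j) = 0 \<and> (\<forall>i\<in>{1..<j}. y (t + i) = 1)"
        then obtain j where j: "1 \<le> j" "j \<le> m" "y (t + j) = 0" "\<forall>i\<in>{1..<j}. y (t + i) = 1" by auto
        have "(\<Sum>i=1..<j. y (t + i)) = (\<Sum>i=1..<j. 1)" using j by (intro sum.cong) auto
        then have s1: "(\<Sum>i=1..<j. y (t + i)) = real j - 1" using j by simp
        have "(\<Sum>i=1..<j. y (t + i)) \<le> Sy" unfolding Sy_def
          by (rule sum_mono2) (use j y_nn in auto)
        then have "Sy \<ge> real j - 1" using s1 by simp
        moreover have "x t \<le> Vb + real (j - 1) * V"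
        proof (rule ramp_down[of "t + j" t "j - 1"])
          show "y (t + j) = 0" by fact
          show "\<forall>i\<in>{t..t + (j - 1)}. y i = 1"
          proof
            fix i assume i: "i \<in> {t..t + (j - 1)}"
            show "y i = 1"
            proof (cases "i = t")
              case True then show ?thesis using yt by simp
            next
              case False
              then have "i - t \<in> {1..<j}" using i j by auto
              then show ?thesis using j(4) i by (metis add_diff_inverse_nat atLeastAtMost_iff not_less)
            qed
          qed
          show "t + j = t + (j - 1) + 1" using j by simp
          show "t + j \<le> T" using j tm by simp
          show "1 \<le> t" using tk by simp
        qed
        moreover have "real (j - 1) = real j - 1" using j by (simp add: of_nat_diff)
        ultimately show ?thesis using j by (intro disjI2 exI[of _ j]) auto
      qed
    qed
    show ?thesis
    proof (cases "\<forall>i\<in>{t - k..t}. y i = 1")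
      case True
      have D0: "D = 0" unfolding D_def
      proof (rule sum.neutral, rule ballI)
        fix s assume s: "s \<in> S"
        then have "s \<le> k - 1" using Sc by auto
        then have "t - s - 1 \<in> {t - k..t}" "t - s \<in> {t - k..t}" using tk k1 by auto
        then have "y (t - s) = 1" "y (t - s - 1) = 1" using True by blast+
        then show "c s * (y (t - s) - y (t - s - 1)) = 0" by simp
      qed
      have "x (t - k + k) \<le> x (t - k) + real k * V"
        by (rule ramp_on) (use True tk tm in auto)
      then have up: "x t \<le> x (t - k) + real k * V" using tk by simp
      have ytk: "y (t - k) = 1" using True by auto
      from FZ show ?thesis
      proof (elim disjE exE conjE)
        assume "Sy = real m"
        then show ?thesis using up D0 ytk yt real_km by (simp add: algebra_simps)
      next
        fix j assume j: "1 \<le> j" "j \<le> m" "real j - 1 \<le> Sy" "x t \<le> Vb + (real j - 1) * V"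
        have "V * Sy \<ge> V * (real j - 1)" using j V0 by simp
        moreover have "(real k - real m) * V \<ge> V" using km1 V0 by simp
        moreover have "x (t - k) \<ge> Cl" using xtk ytk by simp
        ultimately show ?thesis using j D0 ytk yt real_km VbCl by (simp add: algebra_simps)
      qed
    next
      case False
      then obtain cc where cc: "cc \<in> {t - k..t}" "y cc = 0" using ybin' by (metis)
      then have "cc < t" using yt by (metis atLeastAtMost_iff le_neq_implies_less zero_neq_one)
      from last_startup[OF this cc(2) yt] obtain a where
        a: "cc < a" "a \<le> t" "y (a - 1) = 0" "\<forall>i\<in>{a..t}. y i = 1" by blast
      define r where "r = t - a"
      have a2: "2 \<le> a" using a cc tk by auto
      have rk: "r \<le> k - 1" using a cc tk unfolding r_def by auto
      have ar: "a + r = t" using a unfolding r_def by simp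
      have xt: "x t \<le> Vb + real r * V"
        using ramp_up[OF a2 a(3), of r] a(4) ar tm by simp
      have Dle: "D \<le> (if r \<in> S then c r else 0)"
      proof -
        have "D \<le> (\<Sum>s\<in>S. if s = r then c r else 0)" unfolding D_def
        proof (rule sum_mono)
          fix s assume s: "s \<in> S"
          have sk: "s \<le> k - 1" using Sc s by auto
          show "c s * (y (t - s) - y (t - s - 1)) \<le> (if s = r then c r else 0)"
          proof (cases "s < r")
            case True
            then have "y (t - s) = 1" "y (t - s - 1) = 1" using a(4) ar by auto
            then show ?thesis using True by simp
          next
            case False
            show ?thesis
            proof (cases "s = r")
              case True
              then have "t - s = a" "t - s - 1 = a - 1" using ar by auto
              then show ?thesis using True a(3) a(4) by auto
            next
              case False
              then have "s > r" using \<open>\<not> s < r\<close> by simp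
              then have "y (t - s) - y (t - s - 1) \<le> 0"
                using noStart[OF s, of "a - 1"] a(3) ar a2 by auto
              moreover have "c s > 0" using cpos sk by simp
              ultimately show ?thesis using False by (simp add: mult_nonneg_nonpos)
            qed
          qed
        qed
        also have "\<dots> = (if r \<in> S then c r else 0)" using finS by (simp add: sum.delta)
        finally show ?thesis .
      qed
      have cr: "c r = Cl + (real k - real r) * V - Vb" unfolding c_def using rk k1 by (simp add: of_nat_diff)
      have rle: "real r * V \<le> (real k - 1) * V" using rk k1 V0 by (simp add: mult_right_mono)
      show ?thesis
      proof (cases "r \<in> S")
        case True
        have "int r \<le> int L - int m - 1" using Sc True by auto
        have "Sy = (\<Sum>i=1..m. 1)" unfolding Sy_def
        proof (rule sum.cong)
          fix i assume i: "i \<in> {1..m}"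
          show "y (t + i) = 1"
            by (rule MU[OF a2 a(3)]) (use a i ar tm \<open>int r \<le> int L - int m - 1\<close> in auto)
        qed simp
        then have "Sy = real m" by simp
        then show ?thesis using True Dle xt xtk yt real_km cr by (simp add: algebra_simps)
      next
        case False
        then have "D \<le> 0" using Dle by simp
        from FZ show ?thesis
        proof (elim disjE exE conjE)
          assume "Sy = real m"
          then show ?thesis using \<open>D \<le> 0\<close> xt xtk yt real_km rle VbCl by (simp add: algebra_simps)
        next
          fix j assume j: "1 \<le> j" "j \<le> m" "real j - 1 \<le> Sy" "x t \<le> Vb + (real j - 1) * V"
          have "V * Sy \<ge> V * (real j - 1)" using j V0 by simp
          moreover have "(real k - real m) * V \<ge> V" using km1 V0 by simp
          ultimately show ?thesis using j \<open>D \<le> 0\<close> xtk yt real_km VbCl by (simp add: algebra_simps)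
        qed
      qed
    qed
  qed
  then show ?thesis unfolding lhs1_def rhs1_def D_def Sy_def c_def by simp
qed

end

definition revf :: "nat \<Rightarrow> (nat \<Rightarrow> real) \<Rightarrow> nat \<Rightarrow> real" where
  "revf T f = (\<lambda>j. if j \<in> {1..T} then f (T + 1 - j) else 0)"

definition revp :: "nat \<Rightarrow> (nat \<Rightarrow> real) \<times> (nat \<Rightarrow> real) \<Rightarrow> (nat \<Rightarrow> real) \<times> (nat \<Rightarrow> real)" where
  "revp T p = (revf T (fst p), revf T (snd p))"

definition MUp :: "(nat \<Rightarrow> real) \<Rightarrow> nat \<Rightarrow> nat \<Rightarrow> bool" where
  "MUp z L T \<longleftrightarrow> (\<forall>t\<in>{2..T}. \<forall>k\<in>{t..min T (t + L - 1)}. - z (t - 1) + z t - z k \<le> 0)"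

lemma MUp_cong: "(\<And>j. j \<in> {1..T} \<Longrightarrow> z j = z' j) \<Longrightarrow> MUp z L T \<longleftrightarrow> MUp z' L T"
proof -
  assume a: "\<And>j. j \<in> {1..T} \<Longrightarrow> z j = z' j"
  have "(- z (t - 1) + z t - z k \<le> 0) \<longleftrightarrow> (- z' (t - 1) + z' t - z' k \<le> 0)"
    if "t \<in> {2..T}" "k \<in> {t..min T (t + L - 1)}" for t k
  proof -
    have "t - 1 \<in> {1..T}" "t \<in> {1..T}" "k \<in> {1..T}" using that by auto
    then show ?thesis using a[of "t - 1"] a[of t] a[of k] by auto
  qed
  then show ?thesis unfolding MUp_def by auto
qed

lemma last_startup_gen:
  fixes z :: "nat \<Rightarrow> real"
  assumes bin: "\<forall>j. z j = 0 \<or> z j = 1"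
  assumes "c < t" "z c = 0" "z t = 1"
  shows "\<exists>a. c < a \<and> a \<le> t \<and> z (a - 1) = 0 \<and> (\<forall>i\<in>{a..t}. z i = 1)"
  using assms(2-)
proof (induction t)
  case 0 then show ?case by simp
next
  case (Suc t)
  show ?case
  proof (cases "z t = 0")
    case True
    then show ?thesis using Suc.prems by (intro exI[of _ "Suc t"]) auto
  next
    case False
    then have yt: "z t = 1" using bin by auto
    with Suc.prems have "c < t" by (cases "c = t") auto
    from Suc.IH[OF this Suc.prems(2) yt] obtain a where
      "c < a" "a \<le> t" "z (a - 1) = 0" "\<forall>i\<in>{a..t}. z i = 1" by blast
    then show ?thesis using Suc.prems
      by (intro exI[of _ a]) (auto simp: le_Suc_eq)
  qed
qed

lemma MUp_rev:
  assumes bin: "\<forall>j. z j = 0 \<or> z j = 1" and mu: "MUp z L T"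
  shows "MUp (\<lambda>j. z (T + 1 - j)) L T"
  unfolding MUp_def
proof (intro ballI)
  fix t k assume t: "t \<in> {2..T}" and k: "k \<in> {t..min T (t + L - 1)}"
  define u where "u = T + 2 - t"
  have u: "2 \<le> u" "u \<le> T" using t unfolding u_def by auto
  have e1: "T + 1 - (t - 1) = u" "T + 1 - t = u - 1" using t unfolding u_def by auto
  define c where "c = T + 1 - k"
  have c: "1 \<le> c" "c \<le> u - 1" "u \<le> c + L" using k t unfolding c_def u_def by auto
  show "- z (T + 1 - (t - 1)) + z (T + 1 - t) - z (T + 1 - k) \<le> 0"
  proof (cases "z u = 0 \<and> z (u - 1) = 1 \<and> z c = 0")
    case True
    then have "c < u - 1" using c by (metis le_neq_implies_less zero_neq_one)
    from last_startup_gen[OF bin this] True obtain a where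
      a: "c < a" "a \<le> u - 1" "z (a - 1) = 0" "\<forall>i\<in>{a..u - 1}. z i = 1" by blast
    have "a \<ge> 2" using a c by auto
    have aT: "a \<in> {2..T}" using a u \<open>a \<ge> 2\<close> by auto
    have uT: "u \<in> {a..min T (a + L - 1)}" using a u c by auto
    have "- z (a - 1) + z a - z u \<le> 0"
      using mu unfolding MUp_def using aT uT by blast
    then have False using a True \<open>a \<ge> 2\<close> by auto
    then show ?thesis ..
  next
    case False
    then show ?thesis unfolding e1 c_def[symmetric] using bin[rule_format, of u] bin[rule_format, of "u - 1"]
        bin[rule_format, of c] by auto
  qed
qed

context prm begin

lemma Pset_rev:
  assumes "p \<in> Pset T L l Cu Cl V Vb"
  shows "revp T p \<in> Pset T L l Cu Cl V Vb"
proof -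
  obtain x y where p: "p = (x, y)" by fastforce
  interpret pt T L l Cu Cl V Vb x y using assms p by unfold_locales auto
  define x' where "x' = revf T x"
  define y' where "y' = revf T y"
  have rp: "revp T p = (x', y')" unfolding p revp_def x'_def y'_def by simp
  have binall: "\<forall>j. y j = 0 \<or> y j = 1" using ybin' by auto
  have muy: "MUp y L T" unfolding MUp_def using MUc by auto
  have "MUp (\<lambda>j. y (T + 1 - j)) L T" by (rule MUp_rev[OF binall muy])
  then have muy': "MUp y' L T"
    by (rule iffD1[OF MUp_cong, rotated]) (simp add: y'_def revf_def)
  have md: "MUp (\<lambda>j. 1 - y j) l T" unfolding MUp_def using MDc by fastforce
  have "MUp (\<lambda>j. 1 - y (T + 1 - j)) l T"
    using MUp_rev[of "\<lambda>j. 1 - y j", OF _ md] binall by force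
  then have md': "MUp (\<lambda>j. 1 - y' j) l T"
    by (rule iffD1[OF MUp_cong, rotated]) (simp add: y'_def revf_def)
  have c1: "\<forall>t. t \<notin> {1..T} \<longrightarrow> x' t = 0 \<and> y' t = 0" unfolding x'_def y'_def revf_def by auto
  have c2: "\<forall>t\<in>{1..T}. x' t \<ge> 0 \<and> (y' t = 0 \<or> y' t = 1)"
  proof
    fix t assume t: "t \<in> {1..T}"
    have tt: "T + 1 - t \<in> {1..T}" using t by auto
    show "x' t \<ge> 0 \<and> (y' t = 0 \<or> y' t = 1)" using t xnn[OF tt] ybin[OF tt]
      by (simp add: x'_def y'_def revf_def)
  qed
  have c5: "\<forall>t\<in>{1..T}. - x' t + Cl * y' t \<le> 0 \<and> x' t - Cu * y' t \<le> 0"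
  proof
    fix t assume t: "t \<in> {1..T}"
    have tt: "T + 1 - t \<in> {1..T}" using t by auto
    show "- x' t + Cl * y' t \<le> 0 \<and> x' t - Cu * y' t \<le> 0"
      using t xlo[OF tt] xhi[OF tt] by (simp add: x'_def y'_def revf_def)
  qed
  have c3: "\<forall>t\<in>{2..T}. \<forall>k\<in>{t..min T (t + L - 1)}. - y' (t - 1) + y' t - y' k \<le> 0"
    using muy' unfolding MUp_def by blast
  have c4: "\<forall>t\<in>{2..T}. \<forall>k\<in>{t..min T (t + l - 1)}. y' (t - 1) - y' t + y' k \<le> 1"
  proof (intro ballI)
    fix t k assume "t \<in> {2..T}" "k \<in> {t..min T (t + l - 1)}"
    then have "- (1 - y' (t - 1)) + (1 - y' t) - (1 - y' k) \<le> 0" using md' unfolding MUp_def by blast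
    then show "y' (t - 1) - y' t + y' k \<le> 1" by simp
  qed
  have c67: "x' t - x' (t - 1) \<le> V * y' (t - 1) + Vb * (1 - y' (t - 1)) \<and>
             x' (t - 1) - x' t \<le> V * y' t + Vb * (1 - y' t)" if t: "t \<in> {2..T}" for t
  proof -
    define u where "u = T + 2 - t"
    have u: "u \<in> {2..T}" "T + 1 - (t - 1) = u" "T + 1 - t = u - 1" using t unfolding u_def by auto
    have tt: "t - 1 \<in> {1..T}" "t \<in> {1..T}" using t by auto
    show ?thesis
      using RD[OF u(1)] RU[OF u(1)] u tt by (simp add: x'_def y'_def revf_def)
  qed
  have "(x', y') \<in> Pset T L l Cu Cl V Vb"
    unfolding Pset_def using c1 c2 c3 c4 c5 c67 by auto
  then show ?thesis using rp by simp
qed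

lemma lhs2_rev:
  assumes "t \<in> {m+1..T-k}" "1 \<le> k"
  shows "lhs2 k t p = lhs1 k (T + 1 - t) (revp T p)"
  using assms by (auto simp: lhs1_def lhs2_def revp_def revf_def)

lemma rhs2_rev:
  assumes "t \<in> {m+1..T-k}" "1 \<le> k" "\<forall>s\<in>S. s \<le> k - 1"
  shows "rhs2 Cl V Vb k m S t p = rhs1 Cl V Vb k m S (T + 1 - t) (revp T p)"
proof -
  have e1: "(\<Sum>i=1..m. snd (revp T p) (T + 1 - t + i)) = (\<Sum>i=1..m. snd p (t - i))"
    by (rule sum.cong) (use assms in \<open>auto simp: revp_def revf_def\<close>)
  have e2: "(\<Sum>s\<in>S. (Cl + real (k - s) * V - Vb) * (snd (revp T p) (T + 1 - t - s) - snd (revp T p) (T + 1 - t - s - 1)))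
      = (\<Sum>s\<in>S. (Cl + real (k - s) * V - Vb) * (snd p (t + s) - snd p (t + s + 1)))"
  proof (rule sum.cong)
    fix s assume s: "s \<in> S"
    then have "s \<le> k - 1" using assms by auto
    then have "T + 1 - t - s \<in> {1..T}" "T + 1 - t - s - 1 \<in> {1..T}"
      "T + 1 - (T + 1 - t - s) = t + s" "T + 1 - (T + 1 - t - s - 1) = t + s + 1"
      using assms by auto
    then show "(Cl + real (k - s) * V - Vb) * (snd (revp T p) (T + 1 - t - s) - snd (revp T p) (T + 1 - t - s - 1))
      = (Cl + real (k - s) * V - Vb) * (snd p (t + s) - snd p (t + s + 1))"
      by (simp add: revp_def revf_def)
  qed simp
  have e3: "snd (revp T p) (T + 1 - t) = snd p t" "snd (revp T p) (T + 1 - t - k) = snd p (t + k)"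
    using assms by (auto simp: revp_def revf_def)
  show ?thesis unfolding rhs1_def rhs2_def e1 e2 e3 ..
qed

end

lemma scaleR_fun_apply [simp]: "(c *\<^sub>R f) j = c * (f j :: real)"
  by (simp add: scaleR_fun_def)
lemma fst_scaleR_apply: "fst (c *\<^sub>R p) j = c * fst p j"
  by (simp add: scaleR_fun_def)
lemma snd_scaleR_apply: "snd (c *\<^sub>R p) j = c * snd p j"
  by (simp add: scaleR_fun_def)
lemma fst_add_apply: "fst (p + q) j = fst p j + fst q j" by simp
lemma snd_add_apply: "snd (p + q) j = snd p j + snd q j" by simp

lemma lin1: "linear (\<lambda>p. lhs1 k t p - rhs1 Cl V Vb k m S t p)"
proof (rule linearI)
  fix p q :: "(nat \<Rightarrow> real) \<times> (nat \<Rightarrow> real)"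
  show "lhs1 k t (p + q) - rhs1 Cl V Vb k m S t (p + q) =
        lhs1 k t p - rhs1 Cl V Vb k m S t p + (lhs1 k t q - rhs1 Cl V Vb k m S t q)"
  proof -
    have "(\<Sum>s\<in>S. (Cl + real (k - s) * V - Vb) * (snd (p + q) (t - s) - snd (p + q) (t - s - 1)))
      = (\<Sum>s\<in>S. (Cl + real (k - s) * V - Vb) * (snd p (t - s) - snd p (t - s - 1)))
      + (\<Sum>s\<in>S. (Cl + real (k - s) * V - Vb) * (snd q (t - s) - snd q (t - s - 1)))"
      unfolding sum.distrib[symmetric] by (rule sum.cong) (simp_all add: algebra_simps)
    moreover have "(\<Sum>i=1..m. snd (p + q) (t + i)) = (\<Sum>i=1..m. snd p (t + i)) + (\<Sum>i=1..m. snd q (t + i))"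
      unfolding sum.distrib[symmetric] by simp
    ultimately show ?thesis unfolding lhs1_def rhs1_def by (simp add: algebra_simps)
  qed
next
  fix c :: real and p :: "(nat \<Rightarrow> real) \<times> (nat \<Rightarrow> real)"
  show "lhs1 k t (c *\<^sub>R p) - rhs1 Cl V Vb k m S t (c *\<^sub>R p) =
        c *\<^sub>R (lhs1 k t p - rhs1 Cl V Vb k m S t p)"
    by (simp add: lhs1_def rhs1_def sum_distrib_left algebra_simps)
qed

lemma lin2: "linear (\<lambda>p. lhs2 k t p - rhs2 Cl V Vb k m S t p)"
proof (rule linearI)
  fix p q :: "(nat \<Rightarrow> real) \<times> (nat \<Rightarrow> real)"
  show "lhs2 k t (p + q) - rhs2 Cl V Vb k m S t (p + q) =
        lhs2 k t p - rhs2 Cl V Vb k m S t p + (lhs2 k t q - rhs2 Cl V Vb k m S t q)"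
  proof -
    have "(\<Sum>s\<in>S. (Cl + real (k - s) * V - Vb) * (snd (p + q) (t + s) - snd (p + q) (t + s + 1)))
      = (\<Sum>s\<in>S. (Cl + real (k - s) * V - Vb) * (snd p (t + s) - snd p (t + s + 1)))
      + (\<Sum>s\<in>S. (Cl + real (k - s) * V - Vb) * (snd q (t + s) - snd q (t + s + 1)))"
      unfolding sum.distrib[symmetric] by (rule sum.cong) (simp_all add: algebra_simps)
    moreover have "(\<Sum>i=1..m. snd (p + q) (t - i)) = (\<Sum>i=1..m. snd p (t - i)) + (\<Sum>i=1..m. snd q (t - i))"
      unfolding sum.distrib[symmetric] by simp
    ultimately show ?thesis unfolding lhs2_def rhs2_def by (simp add: algebra_simps)
  qed
next
  fix c :: real and p :: "(nat \<Rightarrow> real) \<times> (nat \<Rightarrow> real)"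
  show "lhs2 k t (c *\<^sub>R p) - rhs2 Cl V Vb k m S t (c *\<^sub>R p) =
        c *\<^sub>R (lhs2 k t p - rhs2 Cl V Vb k m S t p)"
    by (simp add: lhs2_def rhs2_def sum_distrib_left algebra_simps)
qed

lemma hull_valid:
  fixes h :: "'a::real_vector \<Rightarrow> real"
  assumes "linear h" "\<forall>p\<in>P. h p \<le> 0"
  shows "\<forall>p\<in>convex hull P. h p \<le> 0"
proof -
  have "convex (h -` {..0})" by (rule convex_linear_vimage[OF assms(1)]) simp
  moreover have "P \<subseteq> h -` {..0}" using assms(2) by auto
  ultimately have "convex hull P \<subseteq> h -` {..0}" by (rule hull_minimal[rotated])
  then show ?thesis by auto
qed

lemma kernel_subspace:
  fixes h :: "'a::real_vector \<Rightarrow> real"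
  assumes "linear h"
  shows "subspace {v. h v = 0}"
  unfolding subspace_def using linear_add[OF assms] linear_scale[OF assms] linear_0[OF assms] by auto

type_synonym pnt = "(nat \<Rightarrow> real) \<times> (nat \<Rightarrow> real)"

definition dl :: "nat \<Rightarrow> nat \<Rightarrow> real" where "dl j = (\<lambda>i. if i = j then 1 else 0)"
definition Xv :: "nat \<Rightarrow> pnt" where "Xv j = (dl j, 0)"
definition Yv :: "nat \<Rightarrow> pnt" where "Yv j = (0, dl j)"
definition Hs :: "nat \<Rightarrow> pnt set" where "Hs T = {p. \<forall>j. j \<notin> {1..T} \<longrightarrow> fst p j = 0 \<and> snd p j = 0}"
definition Es :: "nat \<Rightarrow> pnt set" where "Es T = Xv ` {1..T} \<union> Yv ` {1..T}"

lemma sum_fun_apply: "(\<Sum>x\<in>A. (f x :: nat \<Rightarrow> real)) i = (\<Sum>x\<in>A. f x i)"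
  by (induction A rule: infinite_finite_induct) auto

lemma sum_mult_delta: "finite A \<Longrightarrow> (\<Sum>j\<in>A. (g j :: real) * (if i = j then 1 else 0)) = (if i \<in> A then g i else 0)"
proof -
  assume "finite A"
  have "(\<Sum>j\<in>A. (g j :: real) * (if i = j then 1 else 0)) = (\<Sum>j\<in>A. if i = j then g j else 0)"
    by (rule sum.cong) auto
  then show ?thesis using \<open>finite A\<close> by simp
qed

lemma inj_Xv: "inj Xv" by (rule injI) (auto simp: Xv_def dl_def fun_eq_iff split: if_splits)
lemma inj_Yv: "inj Yv" by (rule injI) (auto simp: Yv_def dl_def fun_eq_iff split: if_splits)
lemma XY_ne: "Xv i \<noteq> Yv j" by (auto simp: Xv_def Yv_def dl_def fun_eq_iff)
lemma YX_ne: "Yv i \<noteq> Xv j" using XY_ne by metis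

lemma Es_finite: "finite (Es T)" by (simp add: Es_def)

lemma Es_card: "card (Es T) = 2 * T"
proof -
  have "card (Xv ` {1..T}) = T" by (simp add: card_image inj_on_subset[OF inj_Xv])
  moreover have "card (Yv ` {1..T}) = T" by (simp add: card_image inj_on_subset[OF inj_Yv])
  moreover have "Xv ` {1..T} \<inter> Yv ` {1..T} = {}" using XY_ne YX_ne by auto
  ultimately show ?thesis unfolding Es_def by (simp add: card_Un_disjoint)
qed

lemma Hs_decomp:
  assumes "p \<in> Hs T"
  shows "p = (\<Sum>j\<in>{1..T}. fst p j *\<^sub>R Xv j) + (\<Sum>j\<in>{1..T}. snd p j *\<^sub>R Yv j)"
proof -
  have f: "fst p i = (\<Sum>j\<in>{1..T}. fst p j * dl j i)" for i
  proof (cases "i \<in> {1..T}")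
    case True
    have "(\<Sum>j\<in>{1..T}. fst p j * dl j i) = (\<Sum>j\<in>{1..T}. if j = i then fst p j else 0)"
      by (rule sum.cong) (auto simp: dl_def)
    then show ?thesis using True by simp
  next
    case False
    have "(\<Sum>j\<in>{1..T}. fst p j * dl j i) = 0" by (rule sum.neutral) (use False in \<open>auto simp: dl_def\<close>)
    then show ?thesis using assms False by (simp add: Hs_def)
  qed
  have s: "snd p i = (\<Sum>j\<in>{1..T}. snd p j * dl j i)" for i
  proof (cases "i \<in> {1..T}")
    case True
    have "(\<Sum>j\<in>{1..T}. snd p j * dl j i) = (\<Sum>j\<in>{1..T}. if j = i then snd p j else 0)"
      by (rule sum.cong) (auto simp: dl_def)
    then show ?thesis using True by simp
  next
    case False
    have "(\<Sum>j\<in>{1..T}. snd p j * dl j i) = 0" by (rule sum.neutral) (use False in \<open>auto simp: dl_def\<close>)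
    then show ?thesis using assms False by (simp add: Hs_def)
  qed
  show ?thesis
    apply (rule prod_eqI)
    apply (simp_all add: fun_eq_iff fst_sum snd_sum sum_fun_apply Xv_def Yv_def)
    apply (intro allI; rule f[unfolded One_nat_def])
    apply (intro allI; rule s[unfolded One_nat_def])
    done
qed

lemma Hs_span: "Hs T \<subseteq> span (Es T)"
proof
  fix p assume p: "p \<in> Hs T"
  have "(\<Sum>j\<in>{1..T}. fst p j *\<^sub>R Xv j) \<in> span (Es T)"
    by (rule span_sum, rule span_scale, rule span_base) (auto simp: Es_def)
  moreover have "(\<Sum>j\<in>{1..T}. snd p j *\<^sub>R Yv j) \<in> span (Es T)"
    by (rule span_sum, rule span_scale, rule span_base) (auto simp: Es_def)
  ultimately have "(\<Sum>j\<in>{1..T}. fst p j *\<^sub>R Xv j) + (\<Sum>j\<in>{1..T}. snd p j *\<^sub>R Yv j) \<in> span (Es T)"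
    by (rule span_add)
  then show "p \<in> span (Es T)" by (subst Hs_decomp[OF p])
qed

lemma Hs_subspace: "subspace (Hs T)"
  unfolding subspace_def Hs_def by auto

lemma Es_indep: "independent (Es T)"
proof
  assume "dependent (Es T)"
  then obtain u where u: "\<exists>v\<in>Es T. u v \<noteq> 0" "(\<Sum>v\<in>Es T. u v *\<^sub>R v) = 0"
    using dependent_finite[OF Es_finite] by blast
  have disj: "Xv ` {1..T} \<inter> Yv ` {1..T} = {}" using XY_ne YX_ne by auto
  have split: "(\<Sum>v\<in>Es T. g v) = (\<Sum>j\<in>{1..T}. g (Xv j)) + (\<Sum>j\<in>{1..T}. g (Yv j))" for g :: "pnt \<Rightarrow> real"
  proof -
    have "(\<Sum>v\<in>Es T. g v) = sum g (Xv ` {1..T}) + sum g (Yv ` {1..T})"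
      unfolding Es_def by (rule sum.union_disjoint) (use disj in auto)
    moreover have "sum g (Xv ` {1..T}) = (\<Sum>j\<in>{1..T}. g (Xv j))"
      by (simp add: sum.reindex inj_on_subset[OF inj_Xv])
    moreover have "sum g (Yv ` {1..T}) = (\<Sum>j\<in>{1..T}. g (Yv j))"
      by (simp add: sum.reindex inj_on_subset[OF inj_Yv])
    ultimately show ?thesis by simp
  qed
  have ux: "u (Xv i) = 0" if i: "i \<in> {1..T}" for i
  proof -
    have "fst (\<Sum>v\<in>Es T. u v *\<^sub>R v) i = 0" using u(2) by simp
    then have "(\<Sum>v\<in>Es T. u v * fst v i) = 0" by (simp add: fst_sum sum_fun_apply)
    then show ?thesis unfolding split using i by (simp add: Xv_def Yv_def dl_def sum_mult_delta)
  qed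
  have uy: "u (Yv i) = 0" if i: "i \<in> {1..T}" for i
  proof -
    have "snd (\<Sum>v\<in>Es T. u v *\<^sub>R v) i = 0" using u(2) by simp
    then have "(\<Sum>v\<in>Es T. u v * snd v i) = 0" by (simp add: snd_sum sum_fun_apply)
    then show ?thesis unfolding split using i by (simp add: Xv_def Yv_def dl_def sum_mult_delta)
  qed
  show False using u(1) ux uy unfolding Es_def by auto
qed

lemma Hs_diff: "p \<in> Hs T \<Longrightarrow> q \<in> Hs T \<Longrightarrow> - p + q \<in> Hs T"
  by (simp add: Hs_def)

lemma UB_aux:
  assumes fin: "finite B" and B: "B \<subseteq> Hs T" and ind: "\<not> affine_dependent B" and a: "a \<in> B"
  shows "independent ((\<lambda>x. - a + x) ` (B - {a}))" "(\<lambda>x. - a + x) ` (B - {a}) \<subseteq> Hs T"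
    "card ((\<lambda>x. - a + x) ` (B - {a})) + 1 = card B" "finite ((\<lambda>x. - a + x) ` (B - {a}))"
proof -
  show "independent ((\<lambda>x. - a + x) ` (B - {a}))"
    using ind affine_dependent_iff_dependent2[OF a] by simp
  show "(\<lambda>x. - a + x) ` (B - {a}) \<subseteq> Hs T" using B a Hs_diff by blast
  have "card ((\<lambda>x. - a + x) ` (B - {a})) = card (B - {a})" by (rule card_image) (simp add: inj_on_def)
  then show "card ((\<lambda>x. - a + x) ` (B - {a})) + 1 = card B" using fin a
    by (metis card_Suc_Diff1 Suc_eq_plus1)
  show "finite ((\<lambda>x. - a + x) ` (B - {a}))" using fin by simp
qed

lemma UB:
  assumes fin: "finite B" and B: "B \<subseteq> Hs T" and ind: "\<not> affine_dependent B" and ne: "B \<noteq> {}"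
  shows "card B \<le> 2 * T + 1"
proof -
  obtain a where a: "a \<in> B" using ne by blast
  note U = UB_aux[OF fin B ind a]
  have "card ((\<lambda>x. - a + x) ` (B - {a})) \<le> card (Es T)"
    using independent_span_bound[OF Es_finite U(1)] U(2) Hs_span by blast
  then show ?thesis using U(3) Es_card by simp
qed

lemma UBF:
  fixes h :: "pnt \<Rightarrow> real"
  assumes fin: "finite B" and B: "B \<subseteq> Hs T" and ind: "\<not> affine_dependent B" and ne: "B \<noteq> {}"
    and lin: "linear h" and Bh: "\<forall>p\<in>B. h p = 0" and w: "w \<in> Hs T" "h w \<noteq> 0"
  shows "card B \<le> 2 * T"
proof -
  obtain a where a: "a \<in> B" using ne by blast
  note U = UB_aux[OF fin B ind a]
  define D where "D = (\<lambda>x. - a + x) ` (B - {a})"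
  have Dk: "D \<subseteq> {v. h v = 0}"
  proof
    fix v assume "v \<in> D"
    then obtain b where b: "b \<in> B" "v = - a + b" unfolding D_def by blast
    have "h v = h (- a) + h b" by (simp only: b(2) linear_add[OF lin])
    also have "\<dots> = - h a + h b" using linear_neg[OF lin] by simp
    finally show "v \<in> {v. h v = 0}" using Bh a b by simp
  qed
  have "span D \<subseteq> {v. h v = 0}" by (rule span_minimal[OF Dk kernel_subspace[OF lin]])
  then have "w \<notin> span D" using w by auto
  then have "independent (insert w D)" using U(1) unfolding D_def[symmetric] by (simp add: independent_insertI)
  moreover have "insert w D \<subseteq> span (Es T)" using U(2) w Hs_span unfolding D_def by blast
  ultimately have "card (insert w D) \<le> card (Es T)"
    using independent_span_bound[OF Es_finite] by blast
  moreover have "w \<notin> D" using \<open>w \<notin> span D\<close> span_base by blast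
  ultimately show ?thesis using U(3,4) Es_card unfolding D_def[symmetric] by simp
qed

lemma indep_sub_finite:
  assumes "independent D" "D \<subseteq> Hs T"
  shows "finite D" "card D \<le> 2 * T"
  using independent_span_bound[OF Es_finite assms(1)] assms(2) Hs_span Es_card by auto

lemma LB:
  assumes Z: "Z \<subseteq> Hs T" and E: "Es T \<subseteq> span Z"
  shows "\<exists>B. finite B \<and> B \<subseteq> insert 0 Z \<and> card B = Suc (2 * T) \<and> \<not> affine_dependent B"
proof -
  obtain D where D: "D \<subseteq> Z" "independent D" "Z \<subseteq> span D" by (rule maximal_independent_subset)
  have fD: "finite D" "card D \<le> 2 * T" using indep_sub_finite[OF D(2)] D(1) Z by auto
  have "span Z \<subseteq> span D" using D(3) by (simp add: span_minimal)
  then have "Es T \<subseteq> span D" using E by auto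
  then have "card (Es T) \<le> card D" using independent_span_bound[OF fD(1) Es_indep] by blast
  then have cD: "card D = 2 * T" using fD Es_card by simp
  have "0 \<notin> D" using D(2) dependent_zero by blast
  have "\<not> affine_dependent (insert 0 D)"
    using affine_dependent_iff_dependent[OF \<open>0 \<notin> D\<close>] D(2) by simp
  moreover have "card (insert 0 D) = Suc (2 * T)" using cD fD \<open>0 \<notin> D\<close> by simp
  ultimately show ?thesis using fD D(1) by (intro exI[of _ "insert 0 D"]) auto
qed

lemma LBF:
  assumes Z: "Z \<subseteq> Hs T" and E: "Es T \<subseteq> span (insert w Z)" and T: "T > 0"
  shows "\<exists>B. finite B \<and> B \<subseteq> insert 0 Z \<and> card B = 2 * T \<and> \<not> affine_dependent B"
proof -
  obtain D where D: "D \<subseteq> Z" "independent D" "Z \<subseteq> span D" by (rule maximal_independent_subset)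
  have fD: "finite D" "card D \<le> 2 * T" using indep_sub_finite[OF D(2)] D(1) Z by auto
  have "insert w Z \<subseteq> span (insert w D)" using D(3) span_mono[of D "insert w D"] span_base by blast
  then have "span (insert w Z) \<subseteq> span (insert w D)" by (simp add: span_minimal)
  then have "Es T \<subseteq> span (insert w D)" using E by auto
  then have "card (Es T) \<le> card (insert w D)" using independent_span_bound[OF _ Es_indep] fD(1) by blast
  also have "\<dots> \<le> card D + 1" using fD(1) by (simp add: card_insert_if)
  finally have "2 * T - 1 \<le> card D" using Es_card by simp
  then obtain D' where D': "D' \<subseteq> D" "card D' = 2 * T - 1" "finite D'" by (rule obtain_subset_with_card_n)
  have iD': "independent D'" using D(2) D'(1) dependent_mono by blast
  have "0 \<notin> D'" using iD' dependent_zero by blast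
  have "\<not> affine_dependent (insert 0 D')"
    using affine_dependent_iff_dependent[OF \<open>0 \<notin> D'\<close>] iD' by simp
  moreover have "card (insert 0 D') = 2 * T" using D' \<open>0 \<notin> D'\<close> T by simp
  ultimately show ?thesis using D' D(1) by (intro exI[of _ "insert 0 D'"]) auto
qed

lemma setdim_eq:
  assumes ne: "K \<noteq> {}"
    and ex: "\<exists>B. finite B \<and> B \<subseteq> K \<and> card B = Suc n \<and> \<not> affine_dependent B"
    and ub: "\<And>B. finite B \<Longrightarrow> B \<subseteq> K \<Longrightarrow> \<not> affine_dependent B \<Longrightarrow> B \<noteq> {} \<Longrightarrow> card B \<le> Suc n"
  shows "setdim K = int n"
proof -
  have "(GREATEST n. \<exists>B. finite B \<and> B \<subseteq> K \<and> card B = Suc n \<and> \<not> affine_dependent B) = n"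
  proof (rule Greatest_equality)
    show "\<exists>B. finite B \<and> B \<subseteq> K \<and> card B = Suc n \<and> \<not> affine_dependent B" by fact
  next
    fix n' assume "\<exists>B. finite B \<and> B \<subseteq> K \<and> card B = Suc n' \<and> \<not> affine_dependent B"
    then obtain B where "finite B" "B \<subseteq> K" "card B = Suc n'" "\<not> affine_dependent B" by blast
    moreover then have "B \<noteq> {}" by auto
    ultimately show "n' \<le> n" using ub by fastforce
  qed
  then show ?thesis unfolding setdim_def using ne by simp
qed

lemma facet_generic:
  fixes P :: "pnt set" and h :: "pnt \<Rightarrow> real"
  assumes PH: "P \<subseteq> Hs T" and P0: "0 \<in> P" and lin: "linear h" and val: "\<forall>p\<in>P. h p \<le> 0"
    and w: "w \<in> Hs T" "h w \<noteq> 0" "w \<in> span P"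
    and E: "Es T \<subseteq> span (insert w {p\<in>P. h p = 0})" and T: "T > 0"
    and fg: "\<And>p. f p - g p = h p"
  shows "facet_defining (convex hull P) f g"
proof -
  have hv: "\<forall>p\<in>convex hull P. h p \<le> 0" by (rule hull_valid[OF lin val])
  have valid: "valid_ineq (convex hull P) f g" unfolding valid_ineq_def using hv fg
    by (metis diff_le_0_iff_le)
  have KH: "convex hull P \<subseteq> Hs T" by (rule hull_minimal[where S=convex, OF PH]) (rule subspace_imp_convex[OF Hs_subspace])
  have h0: "h 0 = 0" by (rule linear_0[OF lin])
  have d1: "setdim (convex hull P) = int (2 * T)"
  proof (rule setdim_eq)
    show "convex hull P \<noteq> {}" using P0 hull_subset[of P convex] by auto
    have "insert w {p\<in>P. h p = 0} \<subseteq> span P"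
    proof
      fix q assume "q \<in> insert w {p\<in>P. h p = 0}"
      then show "q \<in> span P" using w(3) by (auto intro: span_base)
    qed
    then have "span (insert w {p\<in>P. h p = 0}) \<subseteq> span P" by (simp add: span_minimal)
    then have "Es T \<subseteq> span P" using E by auto
    from LB[OF PH this] obtain B where "finite B" "B \<subseteq> insert 0 P" "card B = Suc (2 * T)" "\<not> affine_dependent B" by blast
    moreover have "insert 0 P \<subseteq> convex hull P" using P0 hull_subset[of P convex] by auto
    ultimately show "\<exists>B. finite B \<and> B \<subseteq> convex hull P \<and> card B = Suc (2 * T) \<and> \<not> affine_dependent B"
      by (intro exI[of _ B]) auto
  next
    fix B assume "finite B" "B \<subseteq> convex hull P" "\<not> affine_dependent B" "B \<noteq> {}"
    then show "card B \<le> Suc (2 * T)" using UB[of B T] KH by auto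
  qed
  have FK: "{p \<in> convex hull P. f p = g p} = {p \<in> convex hull P. h p = 0}"
    using fg by (metis (mono_tags, opaque_lifting) eq_iff_diff_eq_0)
  have d2: "setdim {p \<in> convex hull P. f p = g p} = int (2 * T - 1)"
    unfolding FK
  proof (rule setdim_eq)
    have "0 \<in> {p \<in> convex hull P. h p = 0}" using P0 hull_subset[of P convex] h0 by auto
    then show "{p \<in> convex hull P. h p = 0} \<noteq> {}" by blast
    have Z: "{p\<in>P. h p = 0} \<subseteq> Hs T" using PH by auto
    from LBF[OF Z E T] obtain B where "finite B" "B \<subseteq> insert 0 {p\<in>P. h p = 0}" "card B = 2 * T" "\<not> affine_dependent B" by blast
    moreover have "insert 0 {p\<in>P. h p = 0} \<subseteq> {p \<in> convex hull P. h p = 0}" using P0 h0 hull_subset[of P convex] by auto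
    ultimately show "\<exists>B. finite B \<and> B \<subseteq> {p \<in> convex hull P. h p = 0} \<and> card B = Suc (2 * T - 1) \<and> \<not> affine_dependent B"
      using T by (intro exI[of _ B]) auto
  next
    fix B assume B: "finite B" "B \<subseteq> {p \<in> convex hull P. h p = 0}" "\<not> affine_dependent B" "B \<noteq> {}"
    have "card B \<le> 2 * T" by (rule UBF[OF B(1) _ B(3,4) lin _ w(1,2)]) (use B(2) KH in auto)
    then show "card B \<le> Suc (2 * T - 1)" using T by simp
  qed
  show ?thesis unfolding facet_defining_def using valid d1 d2 T by simp
qed

definition yblk :: "nat \<Rightarrow> nat \<Rightarrow> nat \<Rightarrow> real" where
  "yblk a b = (\<lambda>j. if a \<le> j \<and> j \<le> b then 1 else 0)"

context prm begin

lemma block_in_P: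
  assumes ab: "1 \<le> a" "a \<le> b" "b \<le> T" "a = 1 \<or> b = T"
    and xs: "\<forall>j. (j < a \<or> j > b) \<longrightarrow> x j = 0"
    and xb: "\<forall>j\<in>{a..b}. Cl \<le> x j \<and> x j \<le> Cu"
    and xa: "2 \<le> a \<longrightarrow> x a \<le> Vb" and xe: "b < T \<longrightarrow> x b \<le> Vb"
    and xr: "\<forall>j. a < j \<and> j \<le> b \<longrightarrow> \<bar>x j - x (j - 1)\<bar> \<le> V"
  shows "(x, yblk a b) \<in> Pset T L l Cu Cl V Vb"
proof -
  let ?y = "yblk a b"
  have c1: "\<forall>t. t \<notin> {1..T} \<longrightarrow> x t = 0 \<and> ?y t = 0"
  proof (intro allI impI)
    fix t assume "t \<notin> {1..T}"
    then have "t < a \<or> t > b" using ab by auto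
    then show "x t = 0 \<and> ?y t = 0" using xs by (auto simp: yblk_def)
  qed
  have c2: "\<forall>t\<in>{1..T}. x t \<ge> 0 \<and> (?y t = 0 \<or> ?y t = 1)"
  proof
    fix t assume "t \<in> {1..T}"
    show "x t \<ge> 0 \<and> (?y t = 0 \<or> ?y t = 1)"
    proof (cases "a \<le> t \<and> t \<le> b")
      case True
      then have "Cl \<le> x t" using xb by auto
      then show ?thesis using True Cl0 by (simp add: yblk_def)
    next
      case False then show ?thesis using xs by (auto simp: yblk_def)
    qed
  qed
  have c3: "\<forall>t\<in>{2..T}. \<forall>k\<in>{t..min T (t + L - 1)}. - ?y (t - 1) + ?y t - ?y k \<le> 0"
    using ab by (auto simp: yblk_def)
  have c4: "\<forall>t\<in>{2..T}. \<forall>k\<in>{t..min T (t + l - 1)}. ?y (t - 1) - ?y t + ?y k \<le> 1"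
    using ab by (auto simp: yblk_def)
  have c5: "\<forall>t\<in>{1..T}. - x t + Cl * ?y t \<le> 0 \<and> x t - Cu * ?y t \<le> 0"
  proof
    fix t assume "t \<in> {1..T}"
    show "- x t + Cl * ?y t \<le> 0 \<and> x t - Cu * ?y t \<le> 0"
    proof (cases "a \<le> t \<and> t \<le> b")
      case True then show ?thesis using xb by (auto simp: yblk_def)
    next
      case False then show ?thesis using xs by (auto simp: yblk_def)
    qed
  qed
  have xin: "Cl \<le> x j" "x j \<le> Cu" if "a \<le> j" "j \<le> b" for j using xb that by auto
  have xout: "x j = 0" if "\<not> (a \<le> j \<and> j \<le> b)" for j using xs that by auto
  have yv: "?y j = (if a \<le> j \<and> j \<le> b then 1 else 0)" for j by (simp add: yblk_def)
  have c67: "x t - x (t - 1) \<le> V * ?y (t - 1) + Vb * (1 - ?y (t - 1)) \<and>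
             x (t - 1) - x t \<le> V * ?y t + Vb * (1 - ?y t)" if t: "t \<in> {2..T}" for t
  proof (cases "a \<le> t - 1 \<and> t - 1 \<le> b")
    case A: True
    have ya: "?y (t - 1) = 1" by (simp only: yv if_P[OF A])
    show ?thesis
    proof (cases "a \<le> t \<and> t \<le> b")
      case B: True
      have yb: "?y t = 1" by (simp only: yv if_P[OF B])
      have "a < t" using A t by auto
      then have "\<bar>x t - x (t - 1)\<bar> \<le> V" using xr B by auto
      then show ?thesis using ya yb by (simp add: abs_le_iff)
    next
      case B: False
      have yb: "?y t = 0" by (simp only: yv if_not_P[OF B])
      have "x t = 0" using xout B by auto
      moreover have "x (t - 1) \<ge> Cl" using xin A by auto
      moreover have "t - 1 = b" "b < T" using A B t by auto
      ultimately show ?thesis using ya yb Cl0 V0 xe by simp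
    qed
  next
    case A: False
    have ya: "?y (t - 1) = 0" by (simp only: yv if_not_P[OF A])
    have x0: "x (t - 1) = 0" using xout A by auto
    show ?thesis
    proof (cases "a \<le> t \<and> t \<le> b")
      case B: True
      have yb: "?y t = 1" by (simp only: yv if_P[OF B])
      have "t = a" using A B t by auto
      then have "x t \<le> Vb" "x t \<ge> Cl" using xa xin B t by auto
      then show ?thesis using ya yb x0 Cl0 V0 by simp
    next
      case B: False
      have yb: "?y t = 0" by (simp only: yv if_not_P[OF B])
      have "x t = 0" using xout B by auto
      then show ?thesis using ya yb x0 ClVb Cl0 V0 by simp
    qed
  qed
  have c6: "\<forall>t\<in>{2..T}. x t - x (t - 1) \<le> V * ?y (t - 1) + Vb * (1 - ?y (t - 1))" using c67 by blast
  have c7: "\<forall>t\<in>{2..T}. x (t - 1) - x t \<le> V * ?y t + Vb * (1 - ?y t)" using c67 by blast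
  show ?thesis unfolding Pset_def using c1 c2 c3 c4 c5 c6 c7 by auto
qed

end

lemma ramp_step:
  fixes V :: real
  assumes "V > 0" "1 \<le> j"
  shows "\<bar>V * real (min k (j - q)) - V * real (min k (j - 1 - q))\<bar> \<le> V"
proof -
  have "min k (j - q) = min k (j - 1 - q) \<or> min k (j - q) = min k (j - 1 - q) + 1" by linarith
  then show ?thesis using assms by (auto simp: algebra_simps)
qed

lemma yblk_in: "a \<le> j \<Longrightarrow> j \<le> b \<Longrightarrow> yblk a b j = 1" by (simp add: yblk_def)
lemma yblk_out: "j < a \<or> b < j \<Longrightarrow> yblk a b j = 0" by (auto simp: yblk_def)

locale fc = prm +
  fixes k t :: nat and S :: "nat set"
  assumes k1: "1 \<le> k" and tk: "k + 1 \<le> t" and tT: "t \<le> T" and Ck: "Cu - Cl - real k * V > 0"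
    and Sk: "\<forall>s\<in>S. s \<le> k - 1" and Smin: "\<forall>s\<in>S. s \<ge> min (k - 1) 1"
begin

definition hh :: "pnt \<Rightarrow> real" where "hh p = lhs1 k t p - rhs1 Cl V Vb k 0 S t p"
definition eps :: real where "eps = min V (min (Vb - Cl) (Cu - Cl - real k * V))"
definition cc :: "nat \<Rightarrow> real" where "cc s = Cl + real (k - s) * V - Vb"

lemma eps: "eps > 0" "eps \<le> V" "eps \<le> Vb - Cl" "eps \<le> Cu - Cl - real k * V"
  unfolding eps_def using V0 ClVb Ck by auto

lemma hh_eq: "hh p = fst p t - fst p (t - k) - (Cl + real k * V) * snd p t + Cl * snd p (t - k)
   + (\<Sum>s\<in>S. cc s * (snd p (t - s) - snd p (t - s - 1)))"
  by (simp add: hh_def lhs1_def rhs1_def cc_def)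

lemma sum0: "(\<And>s. s \<in> S \<Longrightarrow> g (t - s) = g (t - s - 1)) \<Longrightarrow> (\<Sum>s\<in>S. cc s * (g (t - s) - g (t - s - 1))) = 0"
  by (rule sum.neutral) auto

definition xR :: "nat \<Rightarrow> real" where
  "xR j = (if 1 \<le> j \<and> j \<le> T then Cl + V * real (min k (j - (t - k))) else 0)"

lemma xR_bounds: "1 \<le> j \<Longrightarrow> j \<le> T \<Longrightarrow> Cl \<le> xR j \<and> xR j \<le> Cl + real k * V"
proof -
  assume j: "1 \<le> j" "j \<le> T"
  have "real (min k (j - (t - k))) \<le> real k" by simp
  then have "V * real (min k (j - (t - k))) \<le> V * real k" using V0 by (simp add: mult_left_mono)
  then show ?thesis using j V0 by (simp add: xR_def algebra_simps)
qed

lemma xR_step: "1 < j \<Longrightarrow> j \<le> T \<Longrightarrow> \<bar>xR j - xR (j - 1)\<bar> \<le> V"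
proof -
  assume j: "1 < j" "j \<le> T"
  then have "1 \<le> j - 1" "j - 1 \<le> T" by auto
  then have "xR j - xR (j - 1) = V * real (min k (j - (t - k))) - V * real (min k (j - 1 - (t - k)))"
    using j by (simp add: xR_def)
  then show ?thesis using ramp_step[OF V0, of j k "t - k"] j by simp
qed

lemma xR_flat: "1 < j \<Longrightarrow> j \<le> T \<Longrightarrow> (j \<le> t - k \<or> t < j) \<Longrightarrow> xR j = xR (j - 1)"
proof -
  assume j: "1 < j" "j \<le> T" "j \<le> t - k \<or> t < j"
  then have "min k (j - (t - k)) = min k (j - 1 - (t - k))" using tk by auto
  moreover have "1 \<le> j - 1" "j - 1 \<le> T" using j by auto
  ultimately show ?thesis using j unfolding xR_def by simp
qed

definition R :: pnt where "R = (xR, yblk 1 T)"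
definition Rc :: "nat \<Rightarrow> pnt" where "Rc c = (\<lambda>j. xR j + eps * dl c j, yblk 1 T)"
definition Rsh :: pnt where "Rsh = (\<lambda>j. xR j + eps * yblk 1 T j, yblk 1 T)"
definition Qb :: "nat \<Rightarrow> pnt" where "Qb b = (\<lambda>j. Cl * yblk 1 b j, yblk 1 b)"
definition Qc :: "nat \<Rightarrow> pnt" where "Qc c = (\<lambda>j. Cl * yblk 1 (t - 1) j + eps * dl c j, yblk 1 (t - 1))"
definition Ua :: "nat \<Rightarrow> pnt" where "Ua a = (\<lambda>j. Cl * yblk a T j, yblk a T)"
definition Ws :: "nat \<Rightarrow> pnt" where
  "Ws s = (\<lambda>j. if t - s \<le> j \<and> j \<le> T then Vb + V * real (min s (j - (t - s))) else 0, yblk (t - s) T)"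
definition C0 :: pnt where "C0 = (\<lambda>j. Cl * yblk 1 T j, yblk 1 T)"
definition C0c :: pnt where "C0c = (\<lambda>j. Cl * yblk 1 T j + eps * dl t j, yblk 1 T)"

abbreviation "PP \<equiv> Pset T L l Cu Cl V Vb"

lemma tk1: "1 \<le> t - k" using tk by simp

lemma St: "s \<in> S \<Longrightarrow> s + 1 \<le> k \<and> 2 \<le> t - s \<and> 1 \<le> t - s - 1 \<and> t - k \<le> t - s - 1"
proof -
  assume "s \<in> S"
  then have "s \<le> k - 1" using Sk by auto
  then have "s + 1 \<le> k" using k1 by linarith
  then show ?thesis using tk by linarith
qed

lemma R_P: "R \<in> PP"
  unfolding R_def
proof (rule block_in_P[of 1 T xR])
  show "\<forall>j. (j < 1 \<or> j > T) \<longrightarrow> xR j = 0" by (auto simp: xR_def)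
  show "\<forall>j\<in>{1..T}. Cl \<le> xR j \<and> xR j \<le> Cu" using xR_bounds Ck by fastforce
  show "\<forall>j. 1 < j \<and> j \<le> T \<longrightarrow> \<bar>xR j - xR (j - 1)\<bar> \<le> V" using xR_step by blast
qed (use T0 in auto)

lemma R_h: "hh R = 0"
proof -
  have "(\<Sum>s\<in>S. cc s * (yblk 1 T (t - s) - yblk 1 T (t - s - 1))) = 0"
  proof (rule sum0)
    fix s assume "s \<in> S"
    then show "yblk 1 T (t - s) = yblk 1 T (t - s - 1)" using St[of s] tT by (auto simp: yblk_def)
  qed
  moreover have "xR t = Cl + V * real k" "xR (t - k) = Cl" using tk tT by (auto simp: xR_def)
  moreover have "yblk 1 T t = 1" "yblk 1 T (t - k) = 1" using tk tT by (auto simp: yblk_def)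
  ultimately show ?thesis unfolding hh_eq R_def by (simp add: algebra_simps)
qed

end

context fc begin

lemma finS: "finite S" using Sk by (metis finite_atMost finite_subset atMost_iff subsetI)

lemma eps_bnd: "Cl + real k * V + eps \<le> Cu" "Cl + eps \<le> Cu" "Cl + eps \<le> Vb" "0 \<le> real k * V"
proof -
  show "0 \<le> real k * V" using V0 by simp
  then show "Cl + real k * V + eps \<le> Cu" "Cl + eps \<le> Cu" "Cl + eps \<le> Vb" using eps by linarith+
qed

lemma hh_xshift: "hh (\<lambda>j. f j + g j, y) = hh (f, y) + g t - g (t - k)"
  by (simp add: hh_eq)

lemma dl_simp: "dl c j = (if j = c then 1 else 0)" by (simp add: dl_def)

lemma yblk_simp: "yblk a b j = (if a \<le> j \<and> j \<le> b then 1 else 0)" by (simp add: yblk_def)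

lemma Rc_P: assumes c: "c \<in> {1..T}" "c < t - k \<or> t < c" shows "Rc c \<in> PP"
  unfolding Rc_def
proof (rule block_in_P[of 1 T])
  show "\<forall>j. (j < 1 \<or> j > T) \<longrightarrow> xR j + eps * dl c j = 0" using c by (auto simp: xR_def dl_def)
  show "\<forall>j\<in>{1..T}. Cl \<le> xR j + eps * dl c j \<and> xR j + eps * dl c j \<le> Cu"
  proof
    fix j assume j: "j \<in> {1..T}"
    have "0 \<le> eps * dl c j" "eps * dl c j \<le> eps" using eps by (auto simp: dl_def)
    then show "Cl \<le> xR j + eps * dl c j \<and> xR j + eps * dl c j \<le> Cu" using xR_bounds[of j] j eps_bnd by auto
  qed
  show "\<forall>j. 1 < j \<and> j \<le> T \<longrightarrow> \<bar>xR j + eps * dl c j - (xR (j - 1) + eps * dl c (j - 1))\<bar> \<le> V"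
  proof (intro allI impI)
    fix j assume j: "1 < j \<and> j \<le> T"
    show "\<bar>xR j + eps * dl c j - (xR (j - 1) + eps * dl c (j - 1))\<bar> \<le> V"
    proof (cases "j = c")
      case True
      then have "xR j = xR (j - 1)" using xR_flat[of j] j c by auto
      then show ?thesis using True eps j by (simp add: dl_def)
    next
      case False
      show ?thesis
      proof (cases "j - 1 = c")
        case True
        then have jc: "j = c + 1" using j by auto
        have "j \<le> t - k \<or> t < j" using c(2) unfolding jc by linarith
        then have "xR j = xR (j - 1)" using xR_flat[of j] j by auto
        then show ?thesis using True False eps j by (simp add: dl_def)
      next
        case False2: False
        then show ?thesis using False xR_step[of j] j by (simp add: dl_def)
      qed
    qed
  qed
qed (use T0 in auto)

lemma Rc_h: assumes "c \<noteq> t" "c \<noteq> t - k" shows "hh (Rc c) = 0"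
  using hh_xshift[of xR "\<lambda>j. eps * dl c j" "yblk 1 T"] R_h assms
  unfolding Rc_def R_def by (simp add: dl_def)

lemma Rsh_P: "Rsh \<in> PP"
  unfolding Rsh_def
proof (rule block_in_P[of 1 T])
  show "\<forall>j. (j < 1 \<or> j > T) \<longrightarrow> xR j + eps * yblk 1 T j = 0" by (auto simp: xR_def yblk_def)
  show "\<forall>j\<in>{1..T}. Cl \<le> xR j + eps * yblk 1 T j \<and> xR j + eps * yblk 1 T j \<le> Cu"
  proof
    fix j assume j: "j \<in> {1..T}"
    then show "Cl \<le> xR j + eps * yblk 1 T j \<and> xR j + eps * yblk 1 T j \<le> Cu"
      using xR_bounds[of j] eps eps_bnd by (auto simp: yblk_def)
  qed
  show "\<forall>j. 1 < j \<and> j \<le> T \<longrightarrow> \<bar>xR j + eps * yblk 1 T j - (xR (j - 1) + eps * yblk 1 T (j - 1))\<bar> \<le> V"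
  proof (intro allI impI)
    fix j assume j: "1 < j \<and> j \<le> T"
    then have "yblk 1 T j = 1" "yblk 1 T (j - 1) = 1" by (auto simp: yblk_def)
    then show "\<bar>xR j + eps * yblk 1 T j - (xR (j - 1) + eps * yblk 1 T (j - 1))\<bar> \<le> V"
      using xR_step[of j] j by simp
  qed
qed (use T0 in auto)

lemma Rsh_h: "hh Rsh = 0"
proof -
  have "yblk 1 T t = 1" "yblk 1 T (t - k) = 1" using tk tT by (auto simp: yblk_def)
  then show ?thesis
    using hh_xshift[of xR "\<lambda>j. eps * yblk 1 T j" "yblk 1 T"] R_h unfolding Rsh_def R_def by simp
qed

lemma Qb_P: assumes b: "1 \<le> b" "b \<le> t - 1" shows "Qb b \<in> PP"
  unfolding Qb_def
proof (rule block_in_P[of 1 b])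
  show "\<forall>j. (j < 1 \<or> j > b) \<longrightarrow> Cl * yblk 1 b j = 0" by (auto simp: yblk_def)
  show "\<forall>j\<in>{1..b}. Cl \<le> Cl * yblk 1 b j \<and> Cl * yblk 1 b j \<le> Cu" using CuCl by (auto simp: yblk_def)
  show "b < T \<longrightarrow> Cl * yblk 1 b b \<le> Vb" using b ClVb by (auto simp: yblk_def)
  show "\<forall>j. 1 < j \<and> j \<le> b \<longrightarrow> \<bar>Cl * yblk 1 b j - Cl * yblk 1 b (j - 1)\<bar> \<le> V"
    using V0 by (auto simp: yblk_def)
qed (use b tT in auto)

lemma Qb_h: assumes b: "1 \<le> b" "b \<le> t - 1" "\<forall>s\<in>S. b + 1 + s \<noteq> t" shows "hh (Qb b) = 0"
proof -
  have "(\<Sum>s\<in>S. cc s * (yblk 1 b (t - s) - yblk 1 b (t - s - 1))) = 0"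
  proof (rule sum0)
    fix s assume s: "s \<in> S"
    then have "t - s - 1 \<noteq> b" using b St[of s] by auto
    then show "yblk 1 b (t - s) = yblk 1 b (t - s - 1)" using St[of s] s by (auto simp: yblk_def)
  qed
  moreover have "yblk 1 b t = 0" using b by (auto simp: yblk_def)
  ultimately show ?thesis unfolding hh_eq Qb_def by simp
qed

lemma Qc_P: assumes c: "t - k + 1 \<le> c" "c \<le> t - 1" shows "Qc c \<in> PP"
  unfolding Qc_def
proof (rule block_in_P[of 1 "t - 1"])
  show "\<forall>j. (j < 1 \<or> j > t - 1) \<longrightarrow> Cl * yblk 1 (t - 1) j + eps * dl c j = 0"
    using c tk by (auto simp: yblk_def dl_def)
  show "\<forall>j\<in>{1..t - 1}. Cl \<le> Cl * yblk 1 (t - 1) j + eps * dl c j \<and> Cl * yblk 1 (t - 1) j + eps * dl c j \<le> Cu"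
    using eps eps_bnd CuCl by (auto simp: yblk_def dl_def; linarith)
  show "t - 1 < T \<longrightarrow> Cl * yblk 1 (t - 1) (t - 1) + eps * dl c (t - 1) \<le> Vb"
  proof
    have "1 \<le> t - 1" using tk k1 by linarith
    then have "yblk 1 (t - 1) (t - 1) = 1" by (simp add: yblk_def)
    moreover have "eps * dl c (t - 1) \<le> eps" using eps by (simp add: dl_def)
    ultimately show "Cl * yblk 1 (t - 1) (t - 1) + eps * dl c (t - 1) \<le> Vb" using eps_bnd by simp
  qed
  show "\<forall>j. 1 < j \<and> j \<le> t - 1 \<longrightarrow>
      \<bar>Cl * yblk 1 (t - 1) j + eps * dl c j - (Cl * yblk 1 (t - 1) (j - 1) + eps * dl c (j - 1))\<bar> \<le> V"
    using eps by (auto simp: yblk_def dl_def)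
qed (use tk tT k1 in auto)

lemma Qc_h: assumes c: "t - k + 1 \<le> c" "c \<le> t - 1" shows "hh (Qc c) = 0"
proof -
  have "k \<ge> 2" using c by auto
  then have "\<forall>s\<in>S. s \<ge> 1" using Smin by auto
  then have "hh (Qb (t - 1)) = 0" using tk k1 by (intro Qb_h) auto
  then show ?thesis
    using hh_xshift[of "\<lambda>j. Cl * yblk 1 (t - 1) j" "\<lambda>j. eps * dl c j" "yblk 1 (t - 1)"] c
    unfolding Qc_def Qb_def by (simp add: dl_def)
qed

lemma Ua_P: assumes a: "t + 1 \<le> a" "a \<le> T" shows "Ua a \<in> PP"
  unfolding Ua_def
proof (rule block_in_P[of a T])
  show "\<forall>j. (j < a \<or> j > T) \<longrightarrow> Cl * yblk a T j = 0" by (auto simp: yblk_def)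
  show "\<forall>j\<in>{a..T}. Cl \<le> Cl * yblk a T j \<and> Cl * yblk a T j \<le> Cu" using CuCl by (auto simp: yblk_def)
  show "2 \<le> a \<longrightarrow> Cl * yblk a T a \<le> Vb" using a ClVb by (auto simp: yblk_def)
  show "\<forall>j. a < j \<and> j \<le> T \<longrightarrow> \<bar>Cl * yblk a T j - Cl * yblk a T (j - 1)\<bar> \<le> V"
    using V0 by (auto simp: yblk_def)
qed (use a tk in auto)

lemma Ua_h: assumes a: "t + 1 \<le> a" "a \<le> T" shows "hh (Ua a) = 0"
proof -
  have "(\<Sum>s\<in>S. cc s * (yblk a T (t - s) - yblk a T (t - s - 1))) = 0"
    by (rule sum0) (use a in \<open>auto simp: yblk_def\<close>)
  moreover have "yblk a T t = 0" "yblk a T (t - k) = 0" using a by (auto simp: yblk_def)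
  ultimately show ?thesis unfolding hh_eq Ua_def by simp
qed

lemma C0_P: "C0 \<in> PP"
  unfolding C0_def
proof (rule block_in_P[of 1 T])
  show "\<forall>j. (j < 1 \<or> j > T) \<longrightarrow> Cl * yblk 1 T j = 0" by (auto simp: yblk_def)
  show "\<forall>j\<in>{1..T}. Cl \<le> Cl * yblk 1 T j \<and> Cl * yblk 1 T j \<le> Cu" using CuCl by (auto simp: yblk_def)
  show "\<forall>j. 1 < j \<and> j \<le> T \<longrightarrow> \<bar>Cl * yblk 1 T j - Cl * yblk 1 T (j - 1)\<bar> \<le> V"
    using V0 by (auto simp: yblk_def)
qed (use T0 in auto)

lemma C0c_P: "C0c \<in> PP"
  unfolding C0c_def
proof (rule block_in_P[of 1 T])
  show "\<forall>j. (j < 1 \<or> j > T) \<longrightarrow> Cl * yblk 1 T j + eps * dl t j = 0" using tk tT by (auto simp: yblk_def dl_def)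
  show "\<forall>j\<in>{1..T}. Cl \<le> Cl * yblk 1 T j + eps * dl t j \<and> Cl * yblk 1 T j + eps * dl t j \<le> Cu"
    using eps eps_bnd CuCl by (auto simp: yblk_def dl_def; linarith)
  show "\<forall>j. 1 < j \<and> j \<le> T \<longrightarrow> \<bar>Cl * yblk 1 T j + eps * dl t j - (Cl * yblk 1 T (j - 1) + eps * dl t (j - 1))\<bar> \<le> V"
    using eps by (auto simp: yblk_def dl_def)
qed (use T0 in auto)

lemma Ws_P: assumes s: "s \<in> S" shows "Ws s \<in> PP"
  unfolding Ws_def
proof (rule block_in_P[of "t - s" T])
  have st: "s + 1 \<le> k" "2 \<le> t - s" using St[OF s] by auto
  show "\<forall>j. (j < t - s \<or> j > T) \<longrightarrow> (if t - s \<le> j \<and> j \<le> T then Vb + V * real (min s (j - (t - s))) else 0) = 0"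
    by auto
  show "\<forall>j\<in>{t - s..T}. Cl \<le> (if t - s \<le> j \<and> j \<le> T then Vb + V * real (min s (j - (t - s))) else 0) \<and>
      (if t - s \<le> j \<and> j \<le> T then Vb + V * real (min s (j - (t - s))) else 0) \<le> Cu"
  proof
    fix j assume j: "j \<in> {t - s..T}"
    have "real (min s (j - (t - s))) \<le> real k - 1" using st by linarith
    then have "V * real (min s (j - (t - s))) \<le> V * (real k - 1)" using V0 by (simp add: mult_left_mono)
    then have "V * real (min s (j - (t - s))) \<le> V * real k - V" by (simp add: algebra_simps)
    moreover have "V * real (min s (j - (t - s))) \<ge> 0" using V0 by simp
    ultimately have "Cl \<le> Vb + V * real (min s (j - (t - s))) \<and> Vb + V * real (min s (j - (t - s))) \<le> Cu"
      using ClVb VbCl Ck mult.commute[of "real k" V] by (intro conjI; linarith)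
    moreover have c: "t - s \<le> j \<and> j \<le> T" using j by auto
    ultimately show "Cl \<le> (if t - s \<le> j \<and> j \<le> T then Vb + V * real (min s (j - (t - s))) else 0) \<and>
      (if t - s \<le> j \<and> j \<le> T then Vb + V * real (min s (j - (t - s))) else 0) \<le> Cu"
      unfolding if_P[OF c] by blast
  qed
  show "2 \<le> t - s \<longrightarrow> (if t - s \<le> t - s \<and> t - s \<le> T then Vb + V * real (min s (t - s - (t - s))) else 0) \<le> Vb"
    using ClVb Cl0 by simp
  show "\<forall>j. t - s < j \<and> j \<le> T \<longrightarrow>
      \<bar>(if t - s \<le> j \<and> j \<le> T then Vb + V * real (min s (j - (t - s))) else 0) -
       (if t - s \<le> j - 1 \<and> j - 1 \<le> T then Vb + V * real (min s (j - 1 - (t - s))) else 0)\<bar> \<le> V"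
  proof (intro allI impI)
    fix j assume j: "t - s < j \<and> j \<le> T"
    then have "t - s \<le> j - 1" "j - 1 \<le> T" "t - s \<le> j" "1 \<le> j" by auto
    then show "\<bar>(if t - s \<le> j \<and> j \<le> T then Vb + V * real (min s (j - (t - s))) else 0) -
       (if t - s \<le> j - 1 \<and> j - 1 \<le> T then Vb + V * real (min s (j - 1 - (t - s))) else 0)\<bar> \<le> V"
      using ramp_step[OF V0, of j s "t - s"] j by simp
  qed
qed (use St[OF s] tT in auto)

lemma Ws_h: assumes s: "s \<in> S" shows "hh (Ws s) = 0"
proof -
  have st: "s + 1 \<le> k" "2 \<le> t - s" using St[OF s] by auto
  have sum: "(\<Sum>s'\<in>S. cc s' * (yblk (t - s) T (t - s') - yblk (t - s) T (t - s' - 1))) = cc s"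
  proof -
    have "(\<Sum>s'\<in>S. cc s' * (yblk (t - s) T (t - s') - yblk (t - s) T (t - s' - 1)))
        = (\<Sum>s'\<in>S. if s' = s then cc s else 0)"
    proof (rule sum.cong)
      fix s' assume s': "s' \<in> S"
      have st': "s' + 1 \<le> k" using St[OF s'] by auto
      then have "yblk (t - s) T (t - s') = (if s' \<le> s then 1 else 0)"
        "yblk (t - s) T (t - s' - 1) = (if s' < s then 1 else 0)"
        using st tk tT by (auto simp: yblk_def)
      then show "cc s' * (yblk (t - s) T (t - s') - yblk (t - s) T (t - s' - 1)) = (if s' = s then cc s else 0)"
        by auto
    qed simp
    also have "\<dots> = cc s" using s finS by simp
    finally show ?thesis .
  qed
  have x1: "fst (Ws s) t = Vb + V * real s" using tT st by (simp add: Ws_def)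
  have "t - k < t - s" using st tk by (intro diff_less_mono2) auto
  then have x2: "fst (Ws s) (t - k) = 0" by (simp add: Ws_def)
  have y1: "snd (Ws s) t = 1" "snd (Ws s) (t - k) = 0" using st tT \<open>t - k < t - s\<close> by (auto simp: Ws_def yblk_def)
  have "real (k - s) = real k - real s" using st by (simp add: of_nat_diff)
  then show ?thesis unfolding hh_eq x1 x2 y1 using sum by (simp add: Ws_def cc_def algebra_simps)
qed

end

lemma Hs_fst: "p \<in> Hs T \<Longrightarrow> fst p i = (\<Sum>j\<in>{1..T}. fst p j * dl j i)"
proof -
  assume p: "p \<in> Hs T"
  show ?thesis
  proof (cases "i \<in> {1..T}")
    case True
    have "(\<Sum>j\<in>{1..T}. fst p j * dl j i) = (\<Sum>j\<in>{1..T}. if j = i then fst p j else 0)"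
      by (rule sum.cong) (auto simp: dl_def)
    then show ?thesis using True by simp
  next
    case False
    have "(\<Sum>j\<in>{1..T}. fst p j * dl j i) = 0" by (rule sum.neutral) (use False in \<open>auto simp: dl_def\<close>)
    then show ?thesis using p False by (simp add: Hs_def)
  qed
qed

lemma Pset_Hs: "Pset T L l Cu Cl V Vb \<subseteq> Hs T"
  unfolding Pset_def Hs_def by auto

lemma Pset_0: "Cl > 0 \<Longrightarrow> V > 0 \<Longrightarrow> Vb > Cl \<Longrightarrow> (0::pnt) \<in> Pset T L l Cu Cl V Vb"
  unfolding Pset_def by (auto simp: zero_prod_def)

context fc begin

definition Fc :: "pnt set" where "Fc = {p \<in> PP. hh p = 0}"
definition Sp :: "pnt set" where "Sp = span (insert (Xv t) Fc)"

lemma inSp: "p \<in> PP \<Longrightarrow> hh p = 0 \<Longrightarrow> p \<in> Sp"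
  unfolding Sp_def Fc_def by (intro span_base) auto

lemma diffSp: assumes "p \<in> Sp" "q \<in> Sp" "p - q = eps *\<^sub>R v" shows "v \<in> Sp"
proof -
  have "(1 / eps) *\<^sub>R (p - q) \<in> Sp" unfolding Sp_def
    by (rule span_scale, rule span_diff) (use assms in \<open>auto simp: Sp_def\<close>)
  moreover have "(1 / eps) *\<^sub>R (p - q) = v" using assms(3) eps(1) by simp
  ultimately show ?thesis by simp
qed

lemma Xa: assumes c: "c \<in> {1..T}" "c < t - k \<or> t < c" shows "Xv c \<in> Sp"
proof (rule diffSp)
  have "c \<noteq> t" "c \<noteq> t - k" using c by auto
  then show "Rc c \<in> Sp" using Rc_P[OF c] Rc_h inSp by blast
  show "R \<in> Sp" using R_P R_h inSp by blast
  show "Rc c - R = eps *\<^sub>R Xv c"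
    by (simp add: Rc_def R_def Xv_def fun_eq_iff dl_def)
qed

lemma Xb: assumes c: "t - k + 1 \<le> c" "c \<le> t - 1" shows "Xv c \<in> Sp"
proof (rule diffSp)
  show "Qc c \<in> Sp" using Qc_P[OF c] Qc_h[OF c] inSp by blast
  have "k \<ge> 2" using c by auto
  then have "\<forall>s\<in>S. s \<ge> 1" using Smin by auto
  then have "hh (Qb (t - 1)) = 0" using tk k1 by (intro Qb_h) auto
  moreover have "Qb (t - 1) \<in> PP" using tk k1 by (intro Qb_P) auto
  ultimately show "Qb (t - 1) \<in> Sp" using inSp by blast
  show "Qc c - Qb (t - 1) = eps *\<^sub>R Xv c"
    by (simp add: Qc_def Qb_def Xv_def fun_eq_iff dl_def)
qed

lemma Xt: "Xv t \<in> Sp" unfolding Sp_def by (intro span_base) auto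

lemma Xsum: "(\<Sum>j\<in>{1..T}. Xv j) \<in> Sp"
proof (rule diffSp)
  show "Rsh \<in> Sp" using Rsh_P Rsh_h inSp by blast
  show "R \<in> Sp" using R_P R_h inSp by blast
  have "fst (\<Sum>j\<in>{1..T}. Xv j) i = yblk 1 T i" for i
  proof -
    have "fst (\<Sum>j\<in>{1..T}. Xv j) i = (\<Sum>j\<in>{1..T}. dl j i)" by (simp add: fst_sum sum_fun_apply Xv_def)
    also have "\<dots> = (\<Sum>j\<in>{1..T}. if j = i then 1 else 0)" by (rule sum.cong) (auto simp: dl_def)
    also have "\<dots> = yblk 1 T i" by (simp add: yblk_def)
    finally show ?thesis .
  qed
  moreover have "snd (\<Sum>j\<in>{1..T}. Xv j) = 0" by (simp add: snd_sum Xv_def)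
  ultimately show "Rsh - R = eps *\<^sub>R (\<Sum>j\<in>{1..T}. Xv j)"
    by (simp add: Rsh_def R_def fun_eq_iff prod_eq_iff)
qed

lemma allX: assumes c: "c \<in> {1..T}" shows "Xv c \<in> Sp"
proof -
  have other: "Xv j \<in> Sp" if "j \<in> {1..T}" "j \<noteq> t - k" for j
  proof -
    have "j < t - k \<or> t < j \<or> (t - k + 1 \<le> j \<and> j \<le> t - 1) \<or> j = t"
      using that tk k1 by auto
    then consider "j < t - k \<or> t < j" | "t - k + 1 \<le> j \<and> j \<le> t - 1" | "j = t" by blast
    then show ?thesis
    proof cases
      case 1 then show ?thesis using Xa that by blast
    next
      case 2 then show ?thesis using Xb by blast
    next
      case 3 then show ?thesis using Xt by simp
    qed
  qed
  show ?thesis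
  proof (cases "c = t - k")
    case False then show ?thesis using other c by blast
  next
    case True
    have tkT: "t - k \<in> {1..T}" using tk tT by auto
    have "(\<Sum>j\<in>{1..T}. Xv j) = Xv (t - k) + (\<Sum>j\<in>{1..T} - {t - k}. Xv j)"
      using tkT by (simp add: sum.remove)
    then have "Xv (t - k) = (\<Sum>j\<in>{1..T}. Xv j) - (\<Sum>j\<in>{1..T} - {t - k}. Xv j)" by simp
    moreover have "(\<Sum>j\<in>{1..T} - {t - k}. Xv j) \<in> Sp" unfolding Sp_def
      by (rule span_sum) (use other in \<open>auto simp: Sp_def\<close>)
    ultimately have "Xv (t - k) \<in> Sp" using Xsum unfolding Sp_def by (simp add: span_diff)
    then show ?thesis using True by simp
  qed
qed

lemma ypart: assumes p: "p \<in> Sp" "p \<in> Hs T" shows "(0, snd p) \<in> Sp"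
proof -
  have "(\<Sum>j\<in>{1..T}. fst p j *\<^sub>R Xv j) \<in> Sp" unfolding Sp_def
    by (rule span_sum, rule span_scale) (use allX in \<open>auto simp: Sp_def\<close>)
  then have "p - (\<Sum>j\<in>{1..T}. fst p j *\<^sub>R Xv j) \<in> Sp" using p(1) unfolding Sp_def by (simp add: span_diff)
  moreover have "p - (\<Sum>j\<in>{1..T}. fst p j *\<^sub>R Xv j) = (0, snd p)"
  proof (rule prod_eqI)
    have "fst (\<Sum>j\<in>{1..T}. fst p j *\<^sub>R Xv j) i = fst p i" for i
    proof -
      have A: "fst (\<Sum>j\<in>{1..T}. fst p j *\<^sub>R Xv j) i = (\<Sum>j\<in>{1..T}. fst p j * dl j i)"
        by (simp add: fst_sum sum_fun_apply Xv_def)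
      show ?thesis by (simp only: A Hs_fst[OF p(2), of i, symmetric])
    qed
    then show "fst (p - (\<Sum>j\<in>{1..T}. fst p j *\<^sub>R Xv j)) = fst (0::nat\<Rightarrow>real, snd p)"
      by (simp add: fun_eq_iff)
    show "snd (p - (\<Sum>j\<in>{1..T}. fst p j *\<^sub>R Xv j)) = snd (0::nat\<Rightarrow>real, snd p)"
      by (simp add: snd_sum Xv_def)
  qed
  ultimately show ?thesis by simp
qed

lemma PP_Sp_y: "p \<in> PP \<Longrightarrow> hh p = 0 \<Longrightarrow> (0, snd p) \<in> Sp"
  using inSp ypart Pset_Hs by blast

definition Zs :: "nat \<Rightarrow> pnt" where "Zs a = (0, yblk a T)"

lemma Z1: "Zs 1 \<in> Sp" using PP_Sp_y[OF R_P R_h] by (simp add: Zs_def R_def)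

lemma allZ: assumes a: "1 \<le> a" "a \<le> T + 1" shows "Zs a \<in> Sp"
proof -
  consider "a = 1" | "2 \<le> a \<and> a \<le> t \<and> t - a \<in> S" | "2 \<le> a \<and> a \<le> t \<and> t - a \<notin> S" | "t + 1 \<le> a \<and> a \<le> T" | "a = T + 1"
    using a tT by linarith
  then show ?thesis
  proof cases
    case 1 then show ?thesis using Z1 by simp
  next
    case 2
    have "(0, snd (Ws (t - a))) \<in> Sp" using PP_Sp_y[OF Ws_P Ws_h] 2 by blast
    moreover have "t - (t - a) = a" using 2 by auto
    ultimately show ?thesis by (simp add: Zs_def Ws_def)
  next
    case 3
    have b: "1 \<le> a - 1" "a - 1 \<le> t - 1" "\<forall>s\<in>S. a - 1 + 1 + s \<noteq> t" using 3 by auto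
    have "(0, snd (Qb (a - 1))) \<in> Sp" using PP_Sp_y[OF Qb_P Qb_h] b by blast
    then have "Zs 1 - (0, snd (Qb (a - 1))) \<in> Sp" using Z1 unfolding Sp_def by (simp add: span_diff)
    moreover have "Zs 1 - (0, snd (Qb (a - 1))) = Zs a" using 3 tT
      by (auto simp: Zs_def Qb_def yblk_def fun_eq_iff)
    ultimately show ?thesis by simp
  next
    case 4
    have "(0, snd (Ua a)) \<in> Sp" using PP_Sp_y[OF Ua_P Ua_h] 4 by blast
    then show ?thesis by (simp add: Zs_def Ua_def)
  next
    case 5
    have "Zs a = 0" using 5 by (simp add: Zs_def yblk_def zero_prod_def fun_eq_iff)
    then show ?thesis unfolding Sp_def by (simp add: span_zero)
  qed
qed

lemma allY: assumes j: "j \<in> {1..T}" shows "Yv j \<in> Sp"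
proof -
  have j': "1 \<le> j" "j \<le> T" using j by auto
  have "Zs j \<in> Sp" "Zs (j + 1) \<in> Sp" using allZ[of j] allZ[of "j + 1"] j' by auto
  then have "Zs j - Zs (j + 1) \<in> Sp" unfolding Sp_def by (simp add: span_diff)
  moreover have "Zs j - Zs (j + 1) = Yv j" using j' by (auto simp: Zs_def Yv_def yblk_def dl_def fun_eq_iff)
  ultimately show ?thesis by simp
qed

lemma Es_Sp: "Es T \<subseteq> Sp"
  unfolding Es_def using allX allY by blast

lemma facet1:
  assumes val: "\<forall>p\<in>PP. hh p \<le> 0"
  shows "facet_defining (convex hull PP) (lhs1 k t) (rhs1 Cl V Vb k 0 S t)"
proof (rule facet_generic[of PP T hh "Xv t"])
  show "PP \<subseteq> Hs T" by (rule Pset_Hs)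
  show "0 \<in> PP" using Cl0 V0 ClVb by (intro Pset_0) auto
  show "linear hh" unfolding hh_def[abs_def] by (rule lin1)
  show "\<forall>p\<in>PP. hh p \<le> 0" by fact
  show "Xv t \<in> Hs T" using tk tT by (auto simp: Hs_def Xv_def dl_def)
  have "t - k \<noteq> t" using tk k1 by auto
  then show "hh (Xv t) \<noteq> 0" by (simp add: hh_eq Xv_def dl_def)
  have "(1 / eps) *\<^sub>R (C0c - C0) \<in> span PP"
    by (rule span_scale, rule span_diff) (use C0_P C0c_P in \<open>auto intro: span_base\<close>)
  moreover have "C0c - C0 = eps *\<^sub>R Xv t" by (simp add: C0c_def C0_def Xv_def fun_eq_iff dl_def)
  ultimately show "Xv t \<in> span PP" using eps(1) by simp
  show "Es T \<subseteq> span (insert (Xv t) {p \<in> PP. hh p = 0})" using Es_Sp unfolding Sp_def Fc_def .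
  show "T > 0" by (rule T0)
  show "\<And>p. lhs1 k t p - rhs1 Cl V Vb k 0 S t p = hh p" by (simp add: hh_def)
qed

end

context fc begin
lemma Xt_span: "Xv t \<in> span PP"
proof -
  have "(1 / eps) *\<^sub>R (C0c - C0) \<in> span PP"
    by (rule span_scale, rule span_diff) (use C0_P C0c_P in \<open>auto intro: span_base\<close>)
  moreover have "C0c - C0 = eps *\<^sub>R Xv t" by (simp add: C0c_def C0_def Xv_def fun_eq_iff dl_def)
  ultimately show "Xv t \<in> span PP" using eps(1) by simp
qed
end

lemma revp_linear: "linear (revp T)"
  by (rule linearI) (auto simp: revp_def revf_def fun_eq_iff)

lemma revp_revp: "p \<in> Hs T \<Longrightarrow> revp T (revp T p) = p"
  by (auto simp: revp_def revf_def Hs_def fun_eq_iff intro!: prod_eqI)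

lemma revp_Xv: "j \<in> {1..T} \<Longrightarrow> revp T (Xv j) = Xv (T + 1 - j)"
  by (auto simp: revp_def revf_def Xv_def dl_def fun_eq_iff)

lemma revp_Yv: "j \<in> {1..T} \<Longrightarrow> revp T (Yv j) = Yv (T + 1 - j)"
  by (auto simp: revp_def revf_def Yv_def dl_def fun_eq_iff)

lemma Es_rev: "Es T \<subseteq> revp T ` Es T"
proof
  fix v assume "v \<in> Es T"
  then consider j where "j \<in> {1..T}" "v = Xv j" | j where "j \<in> {1..T}" "v = Yv j" unfolding Es_def by blast
  then show "v \<in> revp T ` Es T"
  proof cases
    case 1
    have j2: "T + 1 - j \<in> {1..T}" "T + 1 - (T + 1 - j) = j" using 1 by auto
    have "v = revp T (Xv (T + 1 - j))" using revp_Xv[OF j2(1)] j2(2) 1 by simp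
    note this j2(1)
    then show ?thesis unfolding Es_def by blast
  next
    case 2
    have j2: "T + 1 - j \<in> {1..T}" "T + 1 - (T + 1 - j) = j" using 2 by auto
    have "v = revp T (Yv (T + 1 - j))" using revp_Yv[OF j2(1)] j2(2) 2 by simp
    note this j2(1)
    then show ?thesis unfolding Es_def by blast
  qed
qed

theorem proposition9:
  fixes T L l k m :: nat and Cu Cl V Vb :: real and S :: "nat set"
  assumes "T > 0" "L > 0" "l > 0"
    and "Cu > Cl" "Cl > 0" "V > 0" "Vb + V \<le> Cu" "Cl < Vb" "Vb < Cl + V"
    and "1 \<le> k" "k \<le> T - 1" "Cu - Cl - real k * V > 0"
    and "m \<le> k - 1"
    and "\<forall>s\<in>S. s \<le> k - 1 \<and> int s \<le> int L - int m - 1"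
  shows "(\<forall>t\<in>{k+1..T-m}. valid_ineq (convex hull (Pset T L l Cu Cl V Vb))
              (lhs1 k t) (rhs1 Cl V Vb k m S t))
       \<and> (\<forall>t\<in>{m+1..T-k}. valid_ineq (convex hull (Pset T L l Cu Cl V Vb))
              (lhs2 k t) (rhs2 Cl V Vb k m S t))
       \<and> ((m = 0 \<and> (\<forall>s\<in>S. s \<ge> min (k - 1) 1)) \<longrightarrow>
            (\<forall>t\<in>{k+1..T-m}. facet_defining (convex hull (Pset T L l Cu Cl V Vb))
              (lhs1 k t) (rhs1 Cl V Vb k m S t))
          \<and> (\<forall>t\<in>{m+1..T-k}. facet_defining (convex hull (Pset T L l Cu Cl V Vb))
              (lhs2 k t) (rhs2 Cl V Vb k m S t)))"
proof -
  interpret prm T L l Cu Cl V Vb using assms by unfold_locales auto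
  let ?P = "Pset T L l Cu Cl V Vb"
  have v1: "lhs1 k t p \<le> rhs1 Cl V Vb k m S t p" if t: "t \<in> {k+1..T-m}" and p: "p \<in> ?P" for t p
  proof -
    obtain x y where xy: "p = (x, y)" by fastforce
    interpret pt T L l Cu Cl V Vb x y using p xy by unfold_locales auto
    show ?thesis unfolding xy by (rule valid1_pt) (use assms t in auto)
  qed
  have v2: "lhs2 k t p \<le> rhs2 Cl V Vb k m S t p" if t: "t \<in> {m+1..T-k}" and p: "p \<in> ?P" for t p
  proof -
    have t': "T + 1 - t \<in> {k+1..T-m}" using t assms by auto
    have "lhs2 k t p = lhs1 k (T + 1 - t) (revp T p)" using lhs2_rev[OF t] assms by simp
    also have "\<dots> \<le> rhs1 Cl V Vb k m S (T + 1 - t) (revp T p)" using v1[OF t' Pset_rev[OF p]] .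
    also have "\<dots> = rhs2 Cl V Vb k m S t p" using rhs2_rev[OF t] assms by simp
    finally show ?thesis .
  qed
  have V1: "valid_ineq (convex hull ?P) (lhs1 k t) (rhs1 Cl V Vb k m S t)" if t: "t \<in> {k+1..T-m}" for t
  proof -
    have "\<forall>p\<in>convex hull ?P. lhs1 k t p - rhs1 Cl V Vb k m S t p \<le> 0"
      by (rule hull_valid[OF lin1]) (use v1[OF t] in auto)
    then show ?thesis unfolding valid_ineq_def by auto
  qed
  have V2: "valid_ineq (convex hull ?P) (lhs2 k t) (rhs2 Cl V Vb k m S t)" if t: "t \<in> {m+1..T-k}" for t
  proof -
    have "\<forall>p\<in>convex hull ?P. lhs2 k t p - rhs2 Cl V Vb k m S t p \<le> 0"
      by (rule hull_valid[OF lin2]) (use v2[OF t] in auto)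
    then show ?thesis unfolding valid_ineq_def by auto
  qed
  have F: "(\<forall>t\<in>{k+1..T-m}. facet_defining (convex hull ?P) (lhs1 k t) (rhs1 Cl V Vb k m S t))
          \<and> (\<forall>t\<in>{m+1..T-k}. facet_defining (convex hull ?P) (lhs2 k t) (rhs2 Cl V Vb k m S t))"
    if m0: "m = 0" and Smin: "\<forall>s\<in>S. s \<ge> min (k - 1) 1"
  proof (intro conjI ballI)
    fix t assume t: "t \<in> {k+1..T-m}"
    interpret fc T L l Cu Cl V Vb k t S
      using assms t m0 Smin by unfold_locales auto
    have "\<forall>p\<in>?P. hh p \<le> 0" using v1[OF t] m0 by (auto simp: hh_def)
    then show "facet_defining (convex hull ?P) (lhs1 k t) (rhs1 Cl V Vb k m S t)"
      using facet1 m0 by simp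
  next
    fix t assume t: "t \<in> {m+1..T-k}"
    define t' where "t' = T + 1 - t"
    have t': "t' \<in> {k+1..T-m}" "T + 1 - t' = t" using t assms unfolding t'_def by auto
    interpret fc T L l Cu Cl V Vb k t' S
      using assms t' m0 Smin by unfold_locales auto
    define h2 where "h2 p = lhs2 k t p - rhs2 Cl V Vb k 0 S t p" for p
    have h2r: "h2 p = hh (revp T p)" for p
    proof -
      have a: "hh (revp T p) = lhs1 k t' (revp T p) - rhs1 Cl V Vb k 0 S t' (revp T p)" by (rule hh_def)
      have b: "lhs2 k t p = lhs1 k t' (revp T p)" unfolding t'_def
        using lhs2_rev[where t=t and m=0 and k=k] t assms m0 by simp
      have c: "rhs2 Cl V Vb k 0 S t p = rhs1 Cl V Vb k 0 S t' (revp T p)" unfolding t'_def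
        using rhs2_rev[where t=t and m=0 and k=k and S=S] t assms m0 by simp
      show ?thesis unfolding h2_def a b c ..
    qed
    show "facet_defining (convex hull ?P) (lhs2 k t) (rhs2 Cl V Vb k m S t)"
      unfolding m0
    proof (rule facet_generic[of ?P T h2 "Xv t"])
      show "?P \<subseteq> Hs T" by (rule Pset_Hs)
      show "0 \<in> ?P" using assms by (intro Pset_0) auto
      show "linear h2" unfolding h2_def[abs_def] by (rule lin2)
      show "\<forall>p\<in>?P. h2 p \<le> 0" using v2[OF t] m0 by (auto simp: h2_def)
      show "Xv t \<in> Hs T" using t assms by (auto simp: Hs_def Xv_def dl_def)
      have "t + k \<noteq> t" using assms by auto
      then show "h2 (Xv t) \<noteq> 0" by (simp add: h2_def lhs2_def rhs2_def Xv_def dl_def)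
      have tT: "t' \<in> {1..T}" using t' assms by auto
      have "revp T (Xv t') \<in> revp T ` span ?P" using Xt_span by blast
      also have "\<dots> = span (revp T ` ?P)" by (rule span_linear_image[OF revp_linear, symmetric])
      also have "\<dots> \<subseteq> span ?P" by (rule span_mono) (use Pset_rev in blast)
      finally show "Xv t \<in> span ?P" using revp_Xv[OF tT] t'(2) by simp
      have "Es T \<subseteq> revp T ` Es T" by (rule Es_rev)
      also have "\<dots> \<subseteq> revp T ` span (insert (Xv t') {p \<in> ?P. hh p = 0})"
        using Es_Sp unfolding Sp_def Fc_def by blast
      also have "\<dots> = span (revp T ` insert (Xv t') {p \<in> ?P. hh p = 0})"
        by (rule span_linear_image[OF revp_linear, symmetric])
      also have "\<dots> \<subseteq> span (insert (Xv t) {p \<in> ?P. h2 p = 0})"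
      proof (rule span_mono)
        show "revp T ` insert (Xv t') {p \<in> ?P. hh p = 0} \<subseteq> insert (Xv t) {p \<in> ?P. h2 p = 0}"
        proof
          fix q assume "q \<in> revp T ` insert (Xv t') {p \<in> ?P. hh p = 0}"
          then obtain p where q: "q = revp T p" "p \<in> insert (Xv t') {p \<in> ?P. hh p = 0}" by blast
          show "q \<in> insert (Xv t) {p \<in> ?P. h2 p = 0}"
          proof (cases "p = Xv t'")
            case True
            then show ?thesis using q revp_Xv[OF tT] t'(2) by simp
          next
            case False
            then have p: "p \<in> ?P" "hh p = 0" using q by auto
            have "revp T q = p" using q(1) revp_revp p(1) Pset_Hs by blast
            then have "h2 q = 0" using h2r[of q] p by simp
            moreover have "q \<in> ?P" using q(1) Pset_rev p(1) by blast
            ultimately show ?thesis by simp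
          qed
        qed
      qed
      finally show "Es T \<subseteq> span (insert (Xv t) {p \<in> ?P. h2 p = 0})" .
      show "T > 0" by fact
      show "\<And>p. lhs2 k t p - rhs2 Cl V Vb k 0 S t p = h2 p" by (simp add: h2_def)
    qed
  qed
  show ?thesis using V1 V2 F by blast
qed

end
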